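(* Let $m\ge1$, $\mathbb{M}=\mathbb{R}$ or $\mathbb{T}$, $a_1,\dots,a_{2m},b_1,\dots,b_{2m}\in\mathbb{C}$, and let $u$ satisfy $$D_t u=D_x^{2m}u+\sum_{j=1}^{2m}\big(a_jD_x^{2m-j}u+b_jD_x^{2m-j}\bar u\big)$$ on $\mathbb{M}$. Then there exists $C>0$ depending only on $\{a_j\},\{b_j\}$ such that $$\Big|\frac{d}{dt}\Big(\|P^+u\|^2+\sum_{j=1}^{2m-1}\mathrm{Re}\,\alpha_j\langle D_x^{-j}\overline{P^-u},P^+u\rangle\Big)+\sum_{j=1}^{2m-1}\big(\lambda_j^+\||\partial_x|^{m-j/2}P^+u\|^2+\lambda_j^-\||\partial_x|^{m-j/2}P^-u\|^2\big)\Big|\le C\|u\|^2$$ and $$\Big|\frac{d}{dt}\Big(\|P^-u\|^2+\sum_{j=1}^{2m-1}\mathrm{Re}\,\alpha_j\langle D_x^{-j}\overline{P^+u},P^-u\rangle\Big)+\sum_{j=1}^{2m-1}(-1)^j\big(\lambda_j^+\||\partial_x|^{m-j/2}P^-u\|^2+\lambda_j^-\||\partial_x|^{m-j/2}P^+u\|^2\big)\Big|\le C\|u\|^2.$$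
   Context: $D_t=-i\partial_t$, $D_x=-i\partial_x$; $\|\cdot\|$ is the $L^2(\mathbb{M})$ norm and $\langle f,g\rangle=\int f\bar g\,dx$. Fourier multipliers: $D_x^s$ has symbol $\xi^s$, $|\partial_x|^s$ has symbol $|\xi|^s$; $P^+f=\mathcal{F}^{-1}(\chi(\xi\ge1)\mathcal{F}f)$, $P^-f=\mathcal{F}^{-1}(\chi(\xi\le-1)\mathcal{F}f)$. Empty sums are zero. Constants: $\alpha_j=b_j-\frac12\sum_{k=1}^{j-1}(1+(-1)^{j-k})\bar a_{j-k}\alpha_k$, $\lambda_j^+=2\,\mathrm{Im}\,a_j+\sum_{k=1}^{j-1}(-1)^{j-k+1}\mathrm{Im}(\bar b_{j-k}\alpha_k)$, $\lambda_j^-=-\sum_{k=1}^{j-1}\mathrm{Im}(\bar b_{j-k}\alpha_k)$, for $1\le j\le 2m-1$. $u$ is assumed regular enough for all quantities to make sense. *)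

theory Defs
  imports "HOL-Analysis.Analysis"
begin

text \<open>Everything is expressed on the Fourier side (frequency variable xi).
  For M = R the frequency space is R with Lebesgue measure; for M = T it is
  the integers with counting measure.  A function u(x) is represented by its
  Fourier transform / Fourier coefficients; by Plancherel, L2 norms and
  inner products are computed on the frequency side (normalisation constant 1).\<close>

datatype domain = Line | Torus

fun freq :: "domain \<Rightarrow> real measure" where
  "freq Line = lborel"
| "freq Torus = count_space \<int>"

definition Dx :: "int \<Rightarrow> (real \<Rightarrow> complex) \<Rightarrow> real \<Rightarrow> complex" where
  "Dx s f \<xi> = (complex_of_real \<xi>) powi s * f \<xi>"

definition absDx :: "real \<Rightarrow> (real \<Rightarrow> complex) \<Rightarrow> real \<Rightarrow> complex" where
  "absDx s f \<xi> = complex_of_real (\<bar>\<xi>\<bar> powr s) * f \<xi>"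

definition Pplus :: "(real \<Rightarrow> complex) \<Rightarrow> real \<Rightarrow> complex" where
  "Pplus f \<xi> = (if \<xi> \<ge> 1 then f \<xi> else 0)"

definition Pminus :: "(real \<Rightarrow> complex) \<Rightarrow> real \<Rightarrow> complex" where
  "Pminus f \<xi> = (if \<xi> \<le> -1 then f \<xi> else 0)"

text \<open>Fourier transform of the complex conjugate of u, in terms of that of u.\<close>
definition conjF :: "(real \<Rightarrow> complex) \<Rightarrow> real \<Rightarrow> complex" where
  "conjF f \<xi> = cnj (f (- \<xi>))"

definition inner_L2 :: "real measure \<Rightarrow> (real \<Rightarrow> complex) \<Rightarrow> (real \<Rightarrow> complex) \<Rightarrow> complex" where
  "inner_L2 \<mu> f g = (\<integral>\<xi>. f \<xi> * cnj (g \<xi>) \<partial>\<mu>)"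

definition normsq :: "real measure \<Rightarrow> (real \<Rightarrow> complex) \<Rightarrow> real" where
  "normsq \<mu> f = (\<integral>\<xi>. (cmod (f \<xi>))\<^sup>2 \<partial>\<mu>)"

function alpha :: "(nat \<Rightarrow> complex) \<Rightarrow> (nat \<Rightarrow> complex) \<Rightarrow> nat \<Rightarrow> complex" where
  "alpha a b j = b j - (1/2) * (\<Sum>k\<in>{1..<j}. (1 + (-1) ^ (j - k)) * cnj (a (j - k)) * alpha a b k)"
  by auto
termination by (relation "Wellfounded.measure (\<lambda>(a, b, j). j)") auto

definition lam_plus :: "(nat \<Rightarrow> complex) \<Rightarrow> (nat \<Rightarrow> complex) \<Rightarrow> nat \<Rightarrow> real" where
  "lam_plus a b j = 2 * Im (a j) +
     (\<Sum>k\<in>{1..<j}. (-1) ^ (j - k + 1) * Im (cnj (b (j - k)) * alpha a b k))"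

definition lam_minus :: "(nat \<Rightarrow> complex) \<Rightarrow> (nat \<Rightarrow> complex) \<Rightarrow> nat \<Rightarrow> real" where
  "lam_minus a b j = - (\<Sum>k\<in>{1..<j}. Im (cnj (b (j - k)) * alpha a b k))"

end

theory Submission
  imports Defs
begin

declare alpha.simps[simp del]


lemma triangle_sum:
  fixes g :: "nat \<Rightarrow> nat \<Rightarrow> 'a::comm_monoid_add"
  shows "(\<Sum>j\<in>{1..<M}. \<Sum>k\<in>{1..<M-j}. g j k) = (\<Sum>n\<in>{1..<M}. \<Sum>j\<in>{1..<n}. g j (n-j))"
proof (induction M)
  case 0 then show ?case by simp
next
  case (Suc M)
  show ?case
  proof (cases "M = 0")
    case True then show ?thesis by simp
  next
    case False
    have "(\<Sum>j\<in>{1..<Suc M}. \<Sum>k\<in>{1..<Suc M-j}. g j k) = (\<Sum>j\<in>{1..<M}. \<Sum>k\<in>{1..<Suc M-j}. g j k)"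
      using False by (simp add: sum.atLeastLessThan_Suc)
    also have "\<dots> = (\<Sum>j\<in>{1..<M}. (\<Sum>k\<in>{1..<M-j}. g j k) + g j (M-j))"
    proof (rule sum.cong[OF refl])
      fix j assume "j \<in> {1..<M}"
      then have "Suc M - j = Suc (M - j)" "1 \<le> M - j" "j < M" by auto
      then show "(\<Sum>k\<in>{1..<Suc M-j}. g j k) = (\<Sum>k\<in>{1..<M-j}. g j k) + g j (M-j)"
        by (simp add: sum.atLeastLessThan_Suc)
    qed
    also have "\<dots> = (\<Sum>n\<in>{1..<M}. \<Sum>j\<in>{1..<n}. g j (n-j)) + (\<Sum>j\<in>{1..<M}. g j (M-j))"
      by (simp only: sum.distrib Suc.IH)
    also have "\<dots> = (\<Sum>n\<in>{1..<Suc M}. \<Sum>j\<in>{1..<n}. g j (n-j))"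
      using False by (simp add: sum.atLeastLessThan_Suc)
    finally show ?thesis .
  qed
qed



definition fco :: "(nat \<Rightarrow> complex) \<Rightarrow> (nat \<Rightarrow> complex) \<Rightarrow> complex \<Rightarrow> real \<Rightarrow> real \<Rightarrow> nat \<Rightarrow> nat \<Rightarrow> real" where
  "fco A B w P2 Q2 j k = (1 + (-1)^k) * Im (alpha A B j * cnj (A k) * w)
     + (-1)^k * Im (alpha A B j * cnj (B k)) * P2 + Im (alpha A B j * cnj (B k)) * Q2"

lemma Im_sgnpow: "Im ((-1)^k * z) = (-1)^k * Im z"
  by (cases "even k") auto
lemma Im_1sgnpow: "Im ((1 + (-1)^k) * z) = (1 + (-1)^k) * Im z"
  by (cases "even k") auto

lemma coeff_zero:
  "-2*(Im (A n)*P2 + Im (B n * w)) + 2*Im (alpha A B n * w) + (lam_plus A B n * P2 + lam_minus A B n * Q2)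
    + (\<Sum>j\<in>{1..<n}. fco A B w P2 Q2 j (n-j)) = 0"
proof -
  define S where "S = (\<Sum>k\<in>{1..<n}. (1 + (-1) ^ (n - k)) * cnj (A (n - k)) * alpha A B k)"
  have a: "alpha A B n = B n - 1/2 * S" unfolding S_def by (rule alpha.simps)
  have e1: "(1 + (-1) ^ k :: complex) = complex_of_real (1 + (-1)^k)" for k by simp
  have s1: "(\<Sum>j\<in>{1..<n}. (1 + (-1)^(n-j)) * Im (alpha A B j * cnj (A (n-j)) * w)) = Im (S * w)"
    unfolding S_def sum_distrib_right Im_sum
  proof (rule sum.cong[OF refl])
    fix j
    have "(1 + (-1) ^ (n - j)) * cnj (A (n - j)) * alpha A B j * w = (1 + (-1) ^ (n - j)) * (alpha A B j * cnj (A (n - j)) * w)"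
      by (simp only: mult_ac)
    then show "(1 + (-1)^(n-j)) * Im (alpha A B j * cnj (A (n-j)) * w) = Im ((1 + (-1) ^ (n - j)) * cnj (A (n - j)) * alpha A B j * w)"
      by (simp only: Im_1sgnpow)
  qed
  have s2: "(\<Sum>j\<in>{1..<n}. (-1)^(n-j) * Im (alpha A B j * cnj (B (n-j))) * P2)
       = - (\<Sum>k\<in>{1..<n}. (-1) ^ (n - k + 1) * Im (cnj (B (n - k)) * alpha A B k)) * P2"
    unfolding sum_distrib_right sum_negf[symmetric]
    by (rule sum.cong[OF refl]) (simp add: mult.commute)
  have s3: "(\<Sum>j\<in>{1..<n}. Im (alpha A B j * cnj (B (n-j))) * Q2)
       = (\<Sum>k\<in>{1..<n}. Im (cnj (B (n - k)) * alpha A B k)) * Q2"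
    unfolding sum_distrib_right
    by (rule sum.cong[OF refl]) (simp add: mult.commute)
  have "(\<Sum>j\<in>{1..<n}. fco A B w P2 Q2 j (n-j)) = Im (S * w)
     - (\<Sum>k\<in>{1..<n}. (-1) ^ (n - k + 1) * Im (cnj (B (n - k)) * alpha A B k)) * P2
     + (\<Sum>k\<in>{1..<n}. Im (cnj (B (n - k)) * alpha A B k)) * Q2"
    unfolding fco_def sum.distrib s1 s2 s3 by simp
  moreover have "Im (alpha A B n * w) = Im (B n * w) - 1/2 * Im (S * w)"
    unfolding a by (simp add: algebra_simps)
  ultimately show ?thesis
    unfolding lam_plus_def lam_minus_def by (simp add: algebra_simps)
qed



lemma cnj_sgnpow: "cnj ((-1)^k * z) = (-1)^k * cnj z"
  by (cases "even k") auto

lemma Im_ofreal_mult: "Im (complex_of_real r * z) = r * Im z" by simp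
lemma Re_ofreal_mult: "Re (complex_of_real r * z) = r * Re z" by simp
lemma Im_mult_pp: "Im (c * (p * cnj p)) = Im c * (cmod p)^2"
  by (simp add: complex_mult_cnj cmod_power2)

lemma claim1:
  fixes x :: real and p q :: complex and A B :: "nat \<Rightarrow> complex" and N :: nat
  defines "pd \<equiv> \<i> * (complex_of_real (x ^ N) * p + (\<Sum>k=1..N. complex_of_real (x ^ (N-k)) * (A k * p + B k * cnj q)))"
  shows "Re (pd * cnj p + p * cnj pd) = (\<Sum>k=1..N. x^(N-k) * (-2*(Im (A k) * (cmod p)^2 + Im (B k * (cnj p * cnj q)))))"
proof -
  have "pd * cnj p = \<i> * (complex_of_real (x ^ N) * (p * cnj p) + (\<Sum>k=1..N. complex_of_real (x ^ (N-k)) * (A k * (p * cnj p) + B k * (cnj p * cnj q))))"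
    unfolding pd_def by (simp add: algebra_simps sum_distrib_left sum_distrib_right del: of_real_power)
  then have "Re (pd * cnj p) = - (\<Sum>k=1..N. x^(N-k) * (Im (A k) * (cmod p)^2 + Im (B k * (cnj p * cnj q))))"
    by (simp only: Re_i_times Im_sum Im_ofreal_mult distrib_left plus_complex.sel Im_mult_pp complex_In_mult_cnj_zero mult_zero_right add_0 sum.distrib) simp
  moreover have "Re (p * cnj pd) = Re (pd * cnj p)"
    by (metis complex_cnj_cnj complex_cnj_mult mult.commute cnj.sel(1))
  ultimately show ?thesis
    by (simp add: sum_distrib_left algebra_simps sum_negf)
qed


lemma claim2:
  fixes x r :: real and p q c :: complex and A B :: "nat \<Rightarrow> complex" and N :: nat
  defines "pd \<equiv> \<i> * (complex_of_real (x ^ N) * p + (\<Sum>k=1..N. complex_of_real (x ^ (N-k)) * (A k * p + B k * cnj q)))"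
  defines "qd \<equiv> \<i> * (complex_of_real (x ^ N) * q + (\<Sum>k=1..N. (-1)^k * complex_of_real (x ^ (N-k)) * (A k * q + B k * cnj p)))"
  shows "Re (c * complex_of_real r * (cnj qd * cnj p + cnj q * cnj pd)) =
     r * (x^N * (2 * Im (c * (cnj p * cnj q))) + (\<Sum>k=1..N. x^(N-k) * ((1 + (-1)^k) * Im (c * cnj (A k) * (cnj p * cnj q))
        + (-1)^k * Im (c * cnj (B k)) * (cmod p)^2 + Im (c * cnj (B k)) * (cmod q)^2)))"
proof -
  define w where "w = cnj p * cnj q"
  have h2: "cnj qd * cnj p + cnj q * cnj pd = - \<i> * (complex_of_real (x ^ N) * (2 * w) + (\<Sum>k=1..N. complex_of_real (x ^ (N-k)) *
     ((1 + (-1)^k) * (cnj (A k) * w) + (-1)^k * (cnj (B k) * (p * cnj p)) + cnj (B k) * (q * cnj q))))"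
    unfolding pd_def qd_def w_def
    by (simp add: cnj_sum algebra_simps sum_distrib_left sum_distrib_right sum.distrib del: of_real_power)
  have h3: "Re (c * complex_of_real r * (- \<i> * Y)) = r * Im (c * Y)" for Y
    by (simp add: algebra_simps)
  have h4: "Im (c * (complex_of_real (x ^ N) * (2 * w) + (\<Sum>k=1..N. complex_of_real (x ^ (N-k)) *
     ((1 + (-1)^k) * (cnj (A k) * w) + (-1)^k * (cnj (B k) * (p * cnj p)) + cnj (B k) * (q * cnj q)))))
     = x^N * (2 * Im (c * w)) + (\<Sum>k=1..N. x^(N-k) * ((1 + (-1)^k) * Im (c * cnj (A k) * w)
        + (-1)^k * Im (c * cnj (B k)) * (cmod p)^2 + Im (c * cnj (B k)) * (cmod q)^2))"
  proof -
    have t: "Im (c * (complex_of_real t * ((1 + (-1)^k) * (a * w) + (-1)^k * (b * (p * cnj p)) + b * (q * cnj q))))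
      = t * ((1 + (-1)^k) * Im (c * a * w) + (-1)^k * Im (c * b) * (cmod p)^2 + Im (c * b) * (cmod q)^2)" for t k a b
    proof -
      have "c * (complex_of_real t * ((1 + (-1)^k) * (a * w) + (-1)^k * (b * (p * cnj p)) + b * (q * cnj q)))
        = complex_of_real t * ((1 + (-1)^k) * (c * a * w) + (-1)^k * ((c * b) * (p * cnj p)) + (c * b) * (q * cnj q))"
        by (simp only: algebra_simps)
      then show ?thesis
        by (simp only: Im_ofreal_mult plus_complex.sel Im_1sgnpow Im_sgnpow Im_mult_pp) (simp only: mult.assoc)
    qed
    have t0: "Im (c * (complex_of_real (x ^ N) * (2 * w))) = x^N * (2 * Im (c * w))"
      by (simp add: algebra_simps)
    show ?thesis
      unfolding distrib_left[of c] sum_distrib_left[of c] plus_complex.sel Im_sum t t0 ..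
  qed
  show ?thesis unfolding w_def[symmetric] h2 h3 h4 ..
qed



definition T0 :: "(nat \<Rightarrow> complex) \<Rightarrow> (nat \<Rightarrow> complex) \<Rightarrow> complex \<Rightarrow> real \<Rightarrow> nat \<Rightarrow> real" where
  "T0 A B w P2 k = -2*(Im (A k)*P2 + Im (B k * w))"
definition T1 :: "(nat \<Rightarrow> complex) \<Rightarrow> (nat \<Rightarrow> complex) \<Rightarrow> complex \<Rightarrow> nat \<Rightarrow> real" where
  "T1 A B w j = 2*Im (alpha A B j * w)"
definition Lc :: "(nat \<Rightarrow> complex) \<Rightarrow> (nat \<Rightarrow> complex) \<Rightarrow> real \<Rightarrow> real \<Rightarrow> nat \<Rightarrow> real" where
  "Lc A B P2 Q2 j = lam_plus A B j * P2 + lam_minus A B j * Q2"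
definition Kc :: "(nat \<Rightarrow> complex) \<Rightarrow> (nat \<Rightarrow> complex) \<Rightarrow> nat \<Rightarrow> real" where
  "Kc A B N = 2*(cmod (A N) + cmod (B N)) + (\<Sum>j\<in>{1..<N}. \<Sum>k\<in>{1..N}. 2 * cmod (alpha A B j) * (cmod (A k) + cmod (B k)))"

lemma Kc_nonneg: "Kc A B N \<ge> 0"
  unfolding Kc_def by (intro add_nonneg_nonneg sum_nonneg) auto

lemma abs_Im_mult_le: "\<bar>Im (c * w)\<bar> \<le> cmod c * cmod w"
  by (metis abs_Im_le_cmod norm_mult)

lemma fco_bound:
  assumes "P2 \<ge> 0" "Q2 \<ge> 0" "cmod w \<le> P2 + Q2"
  shows "\<bar>fco A B w P2 Q2 j k\<bar> \<le> 2 * cmod (alpha A B j) * (cmod (A k) + cmod (B k)) * (P2 + Q2)"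
proof -
  have s1: "\<bar>(1 + (-1)^k :: real)\<bar> \<le> 2" by (cases "even k") auto
  have s2: "\<bar>((-1)^k :: real)\<bar> = 1" by simp
  have a1: "\<bar>(1 + (-1)^k) * Im (alpha A B j * cnj (A k) * w)\<bar> \<le> 2 * (cmod (alpha A B j) * cmod (A k) * (P2 + Q2))"
  proof -
    have "\<bar>Im (alpha A B j * cnj (A k) * w)\<bar> \<le> cmod (alpha A B j * cnj (A k)) * cmod w"
      by (rule abs_Im_mult_le)
    also have "\<dots> \<le> cmod (alpha A B j * cnj (A k)) * (P2 + Q2)"
      by (rule mult_left_mono) (use assms in auto)
    finally have "\<bar>Im (alpha A B j * cnj (A k) * w)\<bar> \<le> cmod (alpha A B j) * cmod (A k) * (P2 + Q2)"
      by (simp add: norm_mult)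
    then show ?thesis unfolding abs_mult using s1
      by (intro mult_mono) auto
  qed
  have a2: "\<bar>(-1)^k * Im (alpha A B j * cnj (B k)) * P2\<bar> \<le> cmod (alpha A B j) * cmod (B k) * P2"
    using abs_Im_mult_le[of "alpha A B j" "cnj (B k)"] assms
    by (simp add: abs_mult mult_right_mono)
  have a3: "\<bar>Im (alpha A B j * cnj (B k)) * Q2\<bar> \<le> cmod (alpha A B j) * cmod (B k) * Q2"
    using abs_Im_mult_le[of "alpha A B j" "cnj (B k)"] assms
    by (simp add: abs_mult mult_right_mono)
  have "\<bar>fco A B w P2 Q2 j k\<bar> \<le> 2 * (cmod (alpha A B j) * cmod (A k) * (P2 + Q2)) + cmod (alpha A B j) * cmod (B k) * P2 + cmod (alpha A B j) * cmod (B k) * Q2"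
    unfolding fco_def using a1 a2 a3 by linarith
  also have "\<dots> \<le> 2 * cmod (alpha A B j) * (cmod (A k) + cmod (B k)) * (P2 + Q2)"
  proof -
    have t: "0 \<le> cmod (alpha A B j) * cmod (B k) * (P2 + Q2)" using assms by simp
    then show ?thesis by (simp add: algebra_simps)
  qed
  finally show ?thesis .
qed


lemma T0_bound:
  assumes "P2 \<ge> 0" "Q2 \<ge> 0" "cmod w \<le> P2 + Q2"
  shows "\<bar>T0 A B w P2 k\<bar> \<le> 2*(cmod (A k) + cmod (B k)) * (P2 + Q2)"
proof -
  have "\<bar>Im (A k) * P2\<bar> \<le> cmod (A k) * (P2 + Q2)"
    using assms abs_Im_le_cmod[of "A k"] by (simp add: abs_mult mult_mono)
  moreover have "\<bar>Im (B k * w)\<bar> \<le> cmod (B k) * (P2 + Q2)"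
    using abs_Im_mult_le[of "B k" w] mult_left_mono[OF assms(3), of "cmod (B k)"] by simp
  ultimately show ?thesis unfolding T0_def by (simp add: algebra_simps)
qed

lemma assemble:
  fixes x P2 Q2 :: real and w :: complex and N :: nat
  assumes x: "x \<ge> 1" and N: "N \<ge> 1" and P: "P2 \<ge> 0" "Q2 \<ge> 0" "cmod w \<le> P2 + Q2"
  shows "\<bar>(\<Sum>k\<in>{1..N}. x^(N-k) * T0 A B w P2 k)
     + (\<Sum>j\<in>{1..<N}. (1/x^j) * (x^N * T1 A B w j + (\<Sum>k\<in>{1..N}. x^(N-k) * fco A B w P2 Q2 j k)))
     + (\<Sum>j\<in>{1..<N}. x^(N-j) * Lc A B P2 Q2 j)\<bar> \<le> Kc A B N * (P2 + Q2)"
proof -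
  define f where "f = fco A B w P2 Q2"
  have x0: "x > 0" using x by simp
  define High where "High = (\<Sum>j\<in>{1..<N}. \<Sum>k\<in>{N-j..N}. (x^(N-k)/x^j) * f j k)"
  have st1: "(\<Sum>j\<in>{1..<N}. (1/x^j) * (x^N * T1 A B w j + (\<Sum>k\<in>{1..N}. x^(N-k) * f j k)))
     = (\<Sum>j\<in>{1..<N}. x^(N-j) * T1 A B w j) + (\<Sum>j\<in>{1..<N}. \<Sum>k\<in>{1..N}. (x^(N-k)/x^j) * f j k)"
    unfolding sum.distrib[symmetric]
  proof (rule sum.cong[OF refl])
    fix j assume j: "j \<in> {1..<N}"
    have "x^(N-j) = x^N / x^j" using j x0 by (simp add: power_diff)
    then show "(1/x^j) * (x^N * T1 A B w j + (\<Sum>k\<in>{1..N}. x^(N-k) * f j k)) = x^(N-j) * T1 A B w j + (\<Sum>k\<in>{1..N}. (x^(N-k)/x^j) * f j k)"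
      by (simp add: sum_distrib_left field_simps) (simp add: add_divide_distrib sum_divide_distrib)
  qed
  have st2: "(\<Sum>j\<in>{1..<N}. \<Sum>k\<in>{1..N}. (x^(N-k)/x^j) * f j k)
     = (\<Sum>j\<in>{1..<N}. \<Sum>k\<in>{1..<N-j}. (x^(N-k)/x^j) * f j k) + High"
    unfolding High_def sum.distrib[symmetric]
  proof (rule sum.cong[OF refl])
    fix j assume j: "j \<in> {1..<N}"
    have "{1..N} = {1..<N-j} \<union> {N-j..N}" "{1..<N-j} \<inter> {N-j..N} = {}" using j by auto
    then show "(\<Sum>k\<in>{1..N}. (x^(N-k)/x^j) * f j k) = (\<Sum>k\<in>{1..<N-j}. (x^(N-k)/x^j) * f j k) + (\<Sum>k\<in>{N-j..N}. (x^(N-k)/x^j) * f j k)"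
      by (simp add: sum.union_disjoint)
  qed
  have st3: "(\<Sum>j\<in>{1..<N}. \<Sum>k\<in>{1..<N-j}. (x^(N-k)/x^j) * f j k)
     = (\<Sum>n\<in>{1..<N}. x^(N-n) * (\<Sum>j\<in>{1..<n}. f j (n-j)))"
    unfolding triangle_sum[of "\<lambda>j k. (x^(N-k)/x^j) * f j k"] sum_distrib_left
  proof (intro sum.cong refl)
    fix n j assume n: "n \<in> {1..<N}" and j: "j \<in> {1..<n}"
    have "N - (n - j) = (N - n) + j" using n j by auto
    then have "x^(N-(n-j)) = x^(N-n) * x^j" by (simp add: power_add)
    then show "x ^ (N - (n - j)) / x ^ j * f j (n - j) = x ^ (N - n) * f j (n - j)"
      using x0 by simp
  qed
  have st4: "(\<Sum>k\<in>{1..N}. x^(N-k) * T0 A B w P2 k) = (\<Sum>k\<in>{1..<N}. x^(N-k) * T0 A B w P2 k) + T0 A B w P2 N"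
  proof -
    have "{1..N} = insert N {1..<N}" using N by auto
    then show ?thesis by simp
  qed
  have zero: "(\<Sum>n\<in>{1..<N}. x^(N-n) * T0 A B w P2 n) + (\<Sum>n\<in>{1..<N}. x^(N-n) * T1 A B w n)
      + (\<Sum>n\<in>{1..<N}. x^(N-n) * (\<Sum>j\<in>{1..<n}. f j (n-j))) + (\<Sum>n\<in>{1..<N}. x^(N-n) * Lc A B P2 Q2 n) = 0"
  proof -
    have "(\<Sum>n\<in>{1..<N}. x^(N-n) * T0 A B w P2 n) + (\<Sum>n\<in>{1..<N}. x^(N-n) * T1 A B w n)
      + (\<Sum>n\<in>{1..<N}. x^(N-n) * (\<Sum>j\<in>{1..<n}. f j (n-j))) + (\<Sum>n\<in>{1..<N}. x^(N-n) * Lc A B P2 Q2 n)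
      = (\<Sum>n\<in>{1..<N}. x^(N-n) * (T0 A B w P2 n + T1 A B w n + Lc A B P2 Q2 n + (\<Sum>j\<in>{1..<n}. f j (n-j))))"
      by (simp add: sum.distrib algebra_simps)
    also have "\<dots> = 0"
      using coeff_zero[of A _ P2 B w Q2] unfolding T0_def T1_def Lc_def f_def
      by (intro sum.neutral ballI) (simp add: algebra_simps)
    finally show ?thesis .
  qed
  have hb: "\<bar>High\<bar> \<le> (\<Sum>j\<in>{1..<N}. \<Sum>k\<in>{1..N}. 2 * cmod (alpha A B j) * (cmod (A k) + cmod (B k))) * (P2 + Q2)"
  proof -
    have "\<bar>High\<bar> \<le> (\<Sum>j\<in>{1..<N}. \<Sum>k\<in>{N-j..N}. \<bar>(x^(N-k)/x^j) * f j k\<bar>)"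
      unfolding High_def by (rule order_trans[OF sum_abs sum_mono[OF sum_abs]])
    also have "\<dots> \<le> (\<Sum>j\<in>{1..<N}. \<Sum>k\<in>{N-j..N}. \<bar>f j k\<bar>)"
    proof (intro sum_mono)
      fix j k assume j: "j \<in> {1..<N}" and k: "k \<in> {N-j..N}"
      have "x^(N-k) \<le> x^j" using x j k by (intro power_increasing) auto
      then have "\<bar>x^(N-k)/x^j\<bar> \<le> 1" using x0 by simp
      then show "\<bar>(x^(N-k)/x^j) * f j k\<bar> \<le> \<bar>f j k\<bar>"
        unfolding abs_mult by (metis abs_ge_zero mult_left_le_one_le)
    qed
    also have "\<dots> \<le> (\<Sum>j\<in>{1..<N}. \<Sum>k\<in>{1..N}. \<bar>f j k\<bar>)"
    proof (intro sum_mono)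
      fix j assume j: "j \<in> {1..<N}"
      show "(\<Sum>k\<in>{N-j..N}. \<bar>f j k\<bar>) \<le> (\<Sum>k\<in>{1..N}. \<bar>f j k\<bar>)"
        using j by (intro sum_mono2) auto
    qed
    also have "\<dots> \<le> (\<Sum>j\<in>{1..<N}. \<Sum>k\<in>{1..N}. 2 * cmod (alpha A B j) * (cmod (A k) + cmod (B k)) * (P2 + Q2))"
      unfolding f_def by (intro sum_mono fco_bound P)
    finally show ?thesis by (simp add: sum_distrib_right)
  qed
  have "(\<Sum>k\<in>{1..N}. x^(N-k) * T0 A B w P2 k)
     + (\<Sum>j\<in>{1..<N}. (1/x^j) * (x^N * T1 A B w j + (\<Sum>k\<in>{1..N}. x^(N-k) * fco A B w P2 Q2 j k)))
     + (\<Sum>j\<in>{1..<N}. x^(N-j) * Lc A B P2 Q2 j) = T0 A B w P2 N + High"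
    using zero unfolding f_def[symmetric] st1 st2 st3 st4 by simp
  moreover have "\<bar>T0 A B w P2 N + High\<bar> \<le> Kc A B N * (P2 + Q2)"
    using hb T0_bound[OF P, of A B N] unfolding Kc_def by (simp add: algebra_simps)
  ultimately show ?thesis by simp
qed



lemma pointwise_bound:
  fixes x :: real and p q :: complex and A B :: "nat \<Rightarrow> complex" and N :: nat
  assumes x: "x \<ge> 1" and N: "N \<ge> 1"
  defines "pd \<equiv> \<i> * (complex_of_real (x ^ N) * p + (\<Sum>k=1..N. complex_of_real (x ^ (N-k)) * (A k * p + B k * cnj q)))"
  defines "qd \<equiv> \<i> * (complex_of_real (x ^ N) * q + (\<Sum>k=1..N. (-1)^k * complex_of_real (x ^ (N-k)) * (A k * q + B k * cnj p)))"
  shows "\<bar>Re (pd * cnj p + p * cnj pd)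
     + (\<Sum>j\<in>{1..<N}. Re (alpha A B j * complex_of_real (1/x^j) * (cnj qd * cnj p + cnj q * cnj pd)))
     + (\<Sum>j\<in>{1..<N}. x^(N-j) * (lam_plus A B j * (cmod p)^2 + lam_minus A B j * (cmod q)^2))\<bar>
     \<le> Kc A B N * ((cmod p)^2 + (cmod q)^2)"
proof -
  have c1: "Re (pd * cnj p + p * cnj pd) = (\<Sum>k\<in>{1..N}. x^(N-k) * T0 A B (cnj p * cnj q) ((cmod p)^2) k)"
    unfolding pd_def claim1 T0_def ..
  have c2: "Re (alpha A B j * complex_of_real (1/x^j) * (cnj qd * cnj p + cnj q * cnj pd))
     = (1/x^j) * (x^N * T1 A B (cnj p * cnj q) j + (\<Sum>k\<in>{1..N}. x^(N-k) * fco A B (cnj p * cnj q) ((cmod p)^2) ((cmod q)^2) j k))" for j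
    unfolding pd_def qd_def claim2 T1_def fco_def ..
  have w: "cmod (cnj p * cnj q) \<le> (cmod p)^2 + (cmod q)^2"
  proof -
    have "cmod p * cmod q \<le> (cmod p)^2 + (cmod q)^2"
    proof -
      have h: "0 \<le> (cmod p - cmod q)^2" by simp
      have "(cmod p - cmod q)^2 = (cmod p)^2 + (cmod q)^2 - 2*(cmod p * cmod q)" by (simp add: power2_diff)
      moreover have "0 \<le> cmod p * cmod q" by simp
      ultimately show ?thesis using h by linarith
    qed
    then show ?thesis by (simp add: norm_mult)
  qed
  show ?thesis
    unfolding c1 c2 Lc_def[symmetric]
    by (rule assemble[OF x N _ _ w]) auto
qed



lemma mvt_quot_bound:
  fixes f f' :: "real \<Rightarrow> real"
  assumes der: "\<And>\<tau>. \<tau> \<in> ball t d \<Longrightarrow> (f has_real_derivative f' \<tau>) (at \<tau>)"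
    and bd: "\<And>\<tau>. \<tau> \<in> ball t d \<Longrightarrow> \<bar>f' \<tau>\<bar> \<le> B"
    and s: "s \<in> ball t d" "s \<noteq> t"
  shows "\<bar>(f s - f t) / (s - t)\<bar> \<le> B"
proof (cases "s < t")
  case True
  have "(f has_real_derivative f' x) (at x)" if "s \<le> x" "x \<le> t" for x
    using s True that by (intro der) (auto simp: dist_real_def)
  from MVT2[OF True this] obtain z where z: "s < z" "z < t" "f t - f s = (t - s) * f' z" by auto
  have "z \<in> ball t d" using z s by (auto simp: dist_real_def)
  moreover have "(f s - f t) / (s - t) = f' z" using z True
    by (simp add: field_simps)
  ultimately show ?thesis using bd by simp
next
  case False
  then have st: "t < s" using s by auto
  have "(f has_real_derivative f' x) (at x)" if "t \<le> x" "x \<le> s" for x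
    using s st that by (intro der) (auto simp: dist_real_def)
  from MVT2[OF st this] obtain z where z: "t < z" "z < s" "f s - f t = (s - t) * f' z" by auto
  have "z \<in> ball t d" using z s by (auto simp: dist_real_def)
  moreover have "(f s - f t) / (s - t) = f' z" using z st by simp
  ultimately show ?thesis using bd by simp
qed

lemma DI:
  fixes h h' :: "real \<Rightarrow> 'a \<Rightarrow> real" and G :: "'a \<Rightarrow> real"
  assumes J: "open J" "t \<in> J"
    and hint: "\<And>s. s \<in> J \<Longrightarrow> integrable M (h s)"
    and hder: "\<And>s \<xi>. s \<in> J \<Longrightarrow> \<xi> \<in> space M \<Longrightarrow> ((\<lambda>\<tau>. h \<tau> \<xi>) has_real_derivative h' s \<xi>) (at s)"
    and hbd: "\<And>s \<xi>. s \<in> J \<Longrightarrow> \<xi> \<in> space M \<Longrightarrow> \<bar>h' s \<xi>\<bar> \<le> G \<xi>"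
    and G: "integrable M G"
    and h'meas: "h' t \<in> borel_measurable M"
  shows "((\<lambda>s. \<integral>\<xi>. h s \<xi> \<partial>M) has_real_derivative (\<integral>\<xi>. h' t \<xi> \<partial>M)) (at t)"
proof -
  obtain d where d: "d > 0" "ball t d \<subseteq> J" using J open_contains_ball by blast
  let ?F = "\<lambda>s. \<integral>\<xi>. h s \<xi> \<partial>M"
  have "((\<lambda>s. (?F s - ?F t) / (s - t)) \<longlongrightarrow> (\<integral>\<xi>. h' t \<xi> \<partial>M)) (at t)"
    unfolding tendsto_at_iff_sequentially comp_def
  proof (intro allI impI)
    fix X :: "nat \<Rightarrow> real" assume X: "\<forall>i. X i \<in> UNIV - {t}" and Xl: "X \<longlonglongrightarrow> t"
    from Xl d(1) obtain N0 where N0: "\<And>i. i \<ge> N0 \<Longrightarrow> dist (X i) t < d"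
      unfolding lim_sequentially by blast
    define Y where "Y i = X (i + N0)" for i
    have Yb: "Y i \<in> ball t d" for i using N0[of "i + N0"] by (simp add: Y_def dist_commute)
    have YJ: "Y i \<in> J" for i using Yb d by auto
    have Yt: "Y i \<noteq> t" for i using X by (simp add: Y_def)
    have Yl: "Y \<longlonglongrightarrow> t" unfolding Y_def by (rule LIMSEQ_ignore_initial_segment[OF Xl])
    define s where "s i \<xi> = (h (Y i) \<xi> - h t \<xi>) / (Y i - t)" for i \<xi>
    have eq: "(?F (Y i) - ?F t) / (Y i - t) = (\<integral>\<xi>. s i \<xi> \<partial>M)" for i
      unfolding s_def using hint[OF YJ] hint[OF J(2)] by simp
    have "(\<lambda>i. \<integral>\<xi>. s i \<xi> \<partial>M) \<longlonglongrightarrow> (\<integral>\<xi>. h' t \<xi> \<partial>M)"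
    proof (rule integral_dominated_convergence[where w=G])
      show "h' t \<in> borel_measurable M" by fact
      show "s i \<in> borel_measurable M" for i
        unfolding s_def using hint[OF YJ] hint[OF J(2)] by measurable
      show "integrable M G" by fact
      show "AE \<xi> in M. (\<lambda>i. s i \<xi>) \<longlonglongrightarrow> h' t \<xi>"
      proof (rule AE_I2)
        fix \<xi> assume \<xi>: "\<xi> \<in> space M"
        have "((\<lambda>\<tau>. (h \<tau> \<xi> - h t \<xi>) / (\<tau> - t)) \<longlongrightarrow> h' t \<xi>) (at t)"
          using hder[OF J(2) \<xi>] unfolding has_field_derivative_iff .
        then show "(\<lambda>i. s i \<xi>) \<longlonglongrightarrow> h' t \<xi>"
          unfolding tendsto_at_iff_sequentially comp_def s_def using Yt Yl by auto
      qed
      show "AE \<xi> in M. norm (s i \<xi>) \<le> G \<xi>" for i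
      proof (rule AE_I2)
        fix \<xi> assume \<xi>: "\<xi> \<in> space M"
        show "norm (s i \<xi>) \<le> G \<xi>"
          unfolding s_def real_norm_def
          by (rule mvt_quot_bound[where f="\<lambda>\<tau>. h \<tau> \<xi>" and f'="\<lambda>\<tau>. h' \<tau> \<xi>" and d=d])
             (use d Yb Yt hder hbd \<xi> in auto)
      qed
    qed
    then show "(\<lambda>i. (?F (X i) - ?F t) / (X i - t)) \<longlonglongrightarrow> (\<integral>\<xi>. h' t \<xi> \<partial>M)"
      unfolding eq[symmetric] Y_def by (rule LIMSEQ_offset)
  qed
  then show ?thesis unfolding has_field_derivative_iff .
qed



definition PD :: "nat \<Rightarrow> (nat \<Rightarrow> complex) \<Rightarrow> (nat \<Rightarrow> complex) \<Rightarrow> real \<Rightarrow> complex \<Rightarrow> complex \<Rightarrow> complex" where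
  "PD N A B x p q = \<i> * (complex_of_real (x ^ N) * p + (\<Sum>k=1..N. complex_of_real (x ^ (N-k)) * (A k * p + B k * cnj q)))"
definition QD :: "nat \<Rightarrow> (nat \<Rightarrow> complex) \<Rightarrow> (nat \<Rightarrow> complex) \<Rightarrow> real \<Rightarrow> complex \<Rightarrow> complex \<Rightarrow> complex" where
  "QD N A B x p q = \<i> * (complex_of_real (x ^ N) * q + (\<Sum>k=1..N. (-1)^k * complex_of_real (x ^ (N-k)) * (A k * q + B k * cnj p)))"
definition c0 :: "nat \<Rightarrow> (nat \<Rightarrow> complex) \<Rightarrow> (nat \<Rightarrow> complex) \<Rightarrow> real" where
  "c0 N A B = 1 + (\<Sum>k=1..N. cmod (A k) + cmod (B k))"
definition Kd :: "nat \<Rightarrow> (nat \<Rightarrow> complex) \<Rightarrow> (nat \<Rightarrow> complex) \<Rightarrow> real" where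
  "Kd N A B = 4 * c0 N A B * (2 + (\<Sum>j\<in>{1..<N}. cmod (alpha A B j)))"

lemma c0_pos: "c0 N A B \<ge> 1"
  unfolding c0_def by (simp add: sum_nonneg)

lemma Kd_nonneg: "Kd N A B \<ge> 0"
  unfolding Kd_def using c0_pos[of N A B] by (simp add: sum_nonneg)

lemma generic_D_bound:
  fixes x :: real
  assumes x: "x \<ge> 1" and "cmod (s0::complex) \<le> x^N * (cmod p + cmod q)"
    and "\<And>k. k \<in> {1..N} \<Longrightarrow> cmod (s k) \<le> x^N * (cmod (A k) + cmod (B k)) * (cmod p + cmod q)"
  shows "cmod (\<i> * (s0 + (\<Sum>k=1..N. s k))) \<le> c0 N A B * x^N * (cmod p + cmod q)"
proof -
  have "cmod (\<i> * (s0 + (\<Sum>k=1..N. s k))) \<le> cmod s0 + (\<Sum>k=1..N. cmod (s k))"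
    by (simp add: norm_mult) (rule order_trans[OF norm_triangle_ineq add_left_mono[OF norm_sum]])
  also have "\<dots> \<le> x^N * (cmod p + cmod q) + (\<Sum>k=1..N. x^N * (cmod (A k) + cmod (B k)) * (cmod p + cmod q))"
    using assms by (intro add_mono sum_mono) auto
  also have "\<dots> = c0 N A B * x^N * (cmod p + cmod q)"
    unfolding c0_def by (simp add: algebra_simps sum_distrib_left sum_distrib_right sum.distrib)
  finally show ?thesis .
qed

lemma PD_bound:
  assumes x: "x \<ge> 1"
  shows "cmod (PD N A B x p q) \<le> c0 N A B * x^N * (cmod p + cmod q)"
  unfolding PD_def
proof (rule generic_D_bound[OF x])
  have "cmod (complex_of_real (x ^ N) * p) = x^N * cmod p"
    using x by (simp add: norm_mult norm_power)
  then show "cmod (complex_of_real (x ^ N) * p) \<le> x ^ N * (cmod p + cmod q)"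
    using x by (simp add: mult_left_mono)
  fix k assume k: "k \<in> {1..N}"
  have xk: "x^(N-k) \<le> x^N" using x by (intro power_increasing) auto
  have "cmod (complex_of_real (x ^ (N - k)) * (A k * p + B k * cnj q)) \<le> x^(N-k) * (cmod (A k) * cmod p + cmod (B k) * cmod q)"
  proof -
    have "cmod (A k * p + B k * cnj q) \<le> cmod (A k) * cmod p + cmod (B k) * cmod q"
      using norm_triangle_ineq[of "A k * p" "B k * cnj q"] by (simp add: norm_mult)
    moreover have "cmod (complex_of_real (x ^ (N - k)) * (A k * p + B k * cnj q)) = x^(N-k) * cmod (A k * p + B k * cnj q)"
      using x by (simp add: norm_mult norm_power)
    ultimately show ?thesis using x by (simp add: mult_left_mono)
  qed
  also have "\<dots> \<le> x^N * (cmod (A k) + cmod (B k)) * (cmod p + cmod q)"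
  proof -
    have "cmod (A k) * cmod p + cmod (B k) * cmod q \<le> (cmod (A k) + cmod (B k)) * (cmod p + cmod q)"
      by (simp add: algebra_simps)
    then have "x^(N-k) * (cmod (A k) * cmod p + cmod (B k) * cmod q) \<le> x^N * ((cmod (A k) + cmod (B k)) * (cmod p + cmod q))"
      using xk x by (intro mult_mono) auto
    then show ?thesis by (simp add: mult.assoc)
  qed
  finally show "cmod (complex_of_real (x ^ (N - k)) * (A k * p + B k * cnj q)) \<le> x^N * (cmod (A k) + cmod (B k)) * (cmod p + cmod q)" .
qed


lemma QD_bound:
  assumes x: "x \<ge> 1"
  shows "cmod (QD N A B x p q) \<le> c0 N A B * x^N * (cmod p + cmod q)"
  unfolding QD_def
proof (rule generic_D_bound[OF x])
  have "cmod (complex_of_real (x ^ N) * q) = x^N * cmod q"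
    using x by (simp add: norm_mult norm_power)
  then show "cmod (complex_of_real (x ^ N) * q) \<le> x ^ N * (cmod p + cmod q)"
    using x by (simp add: mult_left_mono)
  fix k assume k: "k \<in> {1..N}"
  have xk: "x^(N-k) \<le> x^N" using x by (intro power_increasing) auto
  have "cmod ((-1)^k * complex_of_real (x ^ (N - k)) * (A k * q + B k * cnj p)) \<le> x^(N-k) * (cmod (A k) * cmod q + cmod (B k) * cmod p)"
  proof -
    have "cmod (A k * q + B k * cnj p) \<le> cmod (A k) * cmod q + cmod (B k) * cmod p"
      using norm_triangle_ineq[of "A k * q" "B k * cnj p"] by (simp add: norm_mult)
    moreover have "cmod ((-1)^k * complex_of_real (x ^ (N - k)) * (A k * q + B k * cnj p)) = x^(N-k) * cmod (A k * q + B k * cnj p)"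
      using x by (simp add: norm_mult norm_power)
    ultimately show ?thesis using x by (simp add: mult_left_mono)
  qed
  also have "\<dots> \<le> x^N * (cmod (A k) + cmod (B k)) * (cmod p + cmod q)"
  proof -
    have "cmod (A k) * cmod q + cmod (B k) * cmod p \<le> (cmod (A k) + cmod (B k)) * (cmod p + cmod q)"
      by (simp add: algebra_simps)
    then have "x^(N-k) * (cmod (A k) * cmod q + cmod (B k) * cmod p) \<le> x^N * ((cmod (A k) + cmod (B k)) * (cmod p + cmod q))"
      using xk x by (intro mult_mono) auto
    then show ?thesis by (simp add: mult.assoc)
  qed
  finally show "cmod ((-1)^k * complex_of_real (x ^ (N - k)) * (A k * q + B k * cnj p)) \<le> x^N * (cmod (A k) + cmod (B k)) * (cmod p + cmod q)" .
qed

lemma deriv_bound: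
  fixes x :: real and p q :: complex
  assumes x: "x \<ge> 1"
  shows "\<bar>Re (PD N A B x p q * cnj p + p * cnj (PD N A B x p q))
     + (\<Sum>j\<in>{1..<N}. Re (alpha A B j * complex_of_real (1/x^j) * (cnj (QD N A B x p q) * cnj p + cnj q * cnj (PD N A B x p q))))\<bar>
     \<le> Kd N A B * (x^N * ((cmod p)^2 + (cmod q)^2))"
proof -
  define S where "S = cmod p + cmod q"
  define c where "c = c0 N A B"
  have S0: "S \<ge> 0" unfolding S_def by simp
  have c1: "c \<ge> 1" unfolding c_def by (rule c0_pos)
  have xN: "x^N \<ge> 1" using x by simp
  have Pb: "cmod (PD N A B x p q) \<le> c * x^N * S" unfolding c_def S_def by (rule PD_bound[OF x])
  have Qb: "cmod (QD N A B x p q) \<le> c * x^N * S" unfolding c_def S_def by (rule QD_bound[OF x])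
  have pS: "cmod p \<le> S" "cmod q \<le> S" unfolding S_def by auto
  have t0: "\<bar>Re (PD N A B x p q * cnj p + p * cnj (PD N A B x p q))\<bar> \<le> 2 * (c * x^N * S * S)"
  proof -
    have "\<bar>Re (PD N A B x p q * cnj p + p * cnj (PD N A B x p q))\<bar> \<le> cmod (PD N A B x p q * cnj p + p * cnj (PD N A B x p q))"
      by (rule abs_Re_le_cmod)
    also have "\<dots> \<le> cmod (PD N A B x p q) * cmod p + cmod p * cmod (PD N A B x p q)"
      using norm_triangle_ineq[of "PD N A B x p q * cnj p" "p * cnj (PD N A B x p q)"] by (simp add: norm_mult)
    also have "\<dots> \<le> (c * x^N * S) * S + S * (c * x^N * S)"
      using Pb pS S0 c1 xN by (intro add_mono mult_mono) auto
    finally show ?thesis by (simp add: algebra_simps)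
  qed
  have tj: "\<bar>Re (alpha A B j * complex_of_real (1/x^j) * (cnj (QD N A B x p q) * cnj p + cnj q * cnj (PD N A B x p q)))\<bar>
      \<le> cmod (alpha A B j) * (2 * (c * x^N * S * S))" for j
  proof -
    have xj: "0 < 1/x^j" "1/x^j \<le> 1" using x by auto
    have "\<bar>Re (alpha A B j * complex_of_real (1/x^j) * (cnj (QD N A B x p q) * cnj p + cnj q * cnj (PD N A B x p q)))\<bar>
      \<le> cmod (alpha A B j * complex_of_real (1/x^j) * (cnj (QD N A B x p q) * cnj p + cnj q * cnj (PD N A B x p q)))"
      by (rule abs_Re_le_cmod)
    also have "\<dots> = cmod (alpha A B j) * (1/x^j) * cmod (cnj (QD N A B x p q) * cnj p + cnj q * cnj (PD N A B x p q))"
      using xj x by (simp add: norm_mult norm_divide norm_power)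
    also have "\<dots> \<le> cmod (alpha A B j) * 1 * (cmod (QD N A B x p q) * cmod p + cmod q * cmod (PD N A B x p q))"
    proof (intro mult_mono)
      show "cmod (cnj (QD N A B x p q) * cnj p + cnj q * cnj (PD N A B x p q)) \<le> cmod (QD N A B x p q) * cmod p + cmod q * cmod (PD N A B x p q)"
        using norm_triangle_ineq[of "cnj (QD N A B x p q) * cnj p" "cnj q * cnj (PD N A B x p q)"] by (simp add: norm_mult)
    qed (use xj in auto)
    also have "\<dots> \<le> cmod (alpha A B j) * ((c * x^N * S) * S + S * (c * x^N * S))"
      using Pb Qb pS S0 c1 xN by (intro mult_left_mono add_mono mult_mono) auto
    finally show ?thesis by (simp add: algebra_simps)
  qed
  have SS: "S * S \<le> 2 * ((cmod p)^2 + (cmod q)^2)"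
  proof -
    have "0 \<le> (cmod p - cmod q)^2" by simp
    then show ?thesis unfolding S_def by (simp add: power2_eq_square algebra_simps)
  qed
  have "\<bar>Re (PD N A B x p q * cnj p + p * cnj (PD N A B x p q))
     + (\<Sum>j\<in>{1..<N}. Re (alpha A B j * complex_of_real (1/x^j) * (cnj (QD N A B x p q) * cnj p + cnj q * cnj (PD N A B x p q))))\<bar>
     \<le> 2 * (c * x^N * S * S) + (\<Sum>j\<in>{1..<N}. cmod (alpha A B j) * (2 * (c * x^N * S * S)))"
  proof -
    have s1: "\<bar>\<Sum>j\<in>{1..<N}. Re (alpha A B j * complex_of_real (1/x^j) * (cnj (QD N A B x p q) * cnj p + cnj q * cnj (PD N A B x p q)))\<bar>
      \<le> (\<Sum>j\<in>{1..<N}. cmod (alpha A B j) * (2 * (c * x^N * S * S)))"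
      by (rule order_trans[OF sum_abs sum_mono]) (rule tj)
    then show ?thesis using t0 abs_triangle_ineq[of "Re (PD N A B x p q * cnj p + p * cnj (PD N A B x p q))"
      "\<Sum>j\<in>{1..<N}. Re (alpha A B j * complex_of_real (1/x^j) * (cnj (QD N A B x p q) * cnj p + cnj q * cnj (PD N A B x p q)))"]
      by linarith
  qed
  also have "\<dots> = 2 * c * (2 + (\<Sum>j\<in>{1..<N}. cmod (alpha A B j))) * (x^N * (S * S)) - 2 * c * x^N * S * S"
    by (simp add: algebra_simps sum_distrib_left sum_distrib_right)
  also have "\<dots> \<le> 2 * c * (2 + (\<Sum>j\<in>{1..<N}. cmod (alpha A B j))) * (x^N * (S * S))"
    using c1 xN S0 by simp
  also have "\<dots> \<le> 2 * c * (2 + (\<Sum>j\<in>{1..<N}. cmod (alpha A B j))) * (x^N * (2 * ((cmod p)^2 + (cmod q)^2)))"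
  proof -
    have "0 \<le> (\<Sum>j\<in>{1..<N}. cmod (alpha A B j))" by (rule sum_nonneg) simp
    then have "0 \<le> 2 * c * (2 + (\<Sum>j\<in>{1..<N}. cmod (alpha A B j)))" using c1 by simp
    then show ?thesis using xN SS by (intro mult_left_mono) auto
  qed
  also have "\<dots> = Kd N A B * (x^N * ((cmod p)^2 + (cmod q)^2))"
    unfolding Kd_def c_def by (simp add: algebra_simps)
  finally show ?thesis .
qed



lemma integrable_by_bound:
  fixes f :: "'a \<Rightarrow> 'b::{banach, second_countable_topology}"
  assumes "integrable M D" "f \<in> borel_measurable M" "\<And>\<xi>. \<xi> \<in> space M \<Longrightarrow> norm (f \<xi>) \<le> D \<xi>"
  shows "integrable M f"
proof (rule Bochner_Integration.integrable_bound[OF assms(1,2)])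
  show "AE x in M. norm (f x) \<le> norm (D x)"
  proof (rule AE_I2)
    fix x assume "x \<in> space M"
    then have "norm (f x) \<le> D x" by (rule assms(3))
    then show "norm (f x) \<le> norm (D x)" using abs_ge_self[of "D x"] by simp
  qed
qed

lemma borel_measurable_cnj_fn [measurable]: "(cnj :: complex \<Rightarrow> complex) \<in> borel_measurable borel"
  by (intro borel_measurable_continuous_onI continuous_intros)

lemma pq_le: "cmod p * cmod q \<le> (cmod p)^2 + (cmod q)^2"
proof -
  have h: "0 \<le> (cmod p - cmod q)^2" by simp
  have "(cmod p - cmod q)^2 = (cmod p)^2 + (cmod q)^2 - 2*(cmod p * cmod q)" by (simp add: power2_diff)
  moreover have "0 \<le> cmod p * cmod q" by simp
  ultimately show ?thesis using h by linarith
qed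

lemma core:
  fixes M :: "real measure" and J :: "real set" and P Q :: "real \<Rightarrow> real \<Rightarrow> complex"
    and G1 G2 :: "real \<Rightarrow> real" and t :: real and N :: nat and A B :: "nat \<Rightarrow> complex"
  assumes N: "N \<ge> 1"
    and idm: "(\<lambda>\<xi>. \<xi>) \<in> borel_measurable M"
    and J: "open J" "t \<in> J"
    and Pm: "\<And>s. s \<in> J \<Longrightarrow> P s \<in> borel_measurable M"
    and Qm: "\<And>s. s \<in> J \<Longrightarrow> Q s \<in> borel_measurable M"
    and G1m: "G1 \<in> borel_measurable M" and G2m: "G2 \<in> borel_measurable M"
    and G1i: "integrable M (\<lambda>\<xi>. if 1 \<le> \<xi> then \<xi>^N * (G1 \<xi>)^2 else 0)"
    and G2i: "integrable M (\<lambda>\<xi>. if 1 \<le> \<xi> then \<xi>^N * (G2 \<xi>)^2 else 0)"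
    and Pb: "\<And>s \<xi>. s \<in> J \<Longrightarrow> \<xi> \<in> space M \<Longrightarrow> 1 \<le> \<xi> \<Longrightarrow> cmod (P s \<xi>) \<le> G1 \<xi>"
    and Qb: "\<And>s \<xi>. s \<in> J \<Longrightarrow> \<xi> \<in> space M \<Longrightarrow> 1 \<le> \<xi> \<Longrightarrow> cmod (Q s \<xi>) \<le> G2 \<xi>"
    and Pd: "\<And>s \<xi>. s \<in> J \<Longrightarrow> \<xi> \<in> space M \<Longrightarrow> 1 \<le> \<xi> \<Longrightarrow>
              ((\<lambda>\<tau>. P \<tau> \<xi>) has_vector_derivative PD N A B \<xi> (P s \<xi>) (Q s \<xi>)) (at s)"
    and Qd: "\<And>s \<xi>. s \<in> J \<Longrightarrow> \<xi> \<in> space M \<Longrightarrow> 1 \<le> \<xi> \<Longrightarrow>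
              ((\<lambda>\<tau>. Q \<tau> \<xi>) has_vector_derivative QD N A B \<xi> (P s \<xi>) (Q s \<xi>)) (at s)"
  shows "\<exists>Q'. ((\<lambda>s. (\<integral>\<xi>. (if 1 \<le> \<xi> then (cmod (P s \<xi>))^2 else 0) \<partial>M)
            + (\<Sum>j\<in>{1..<N}. Re (alpha A B j * (\<integral>\<xi>. (if 1 \<le> \<xi> then complex_of_real (1/\<xi>^j) * cnj (Q s \<xi>) * cnj (P s \<xi>) else 0) \<partial>M))))
          has_real_derivative Q') (at t)
     \<and> \<bar>Q' + (\<Sum>j\<in>{1..<N}. lam_plus A B j * (\<integral>\<xi>. (if 1 \<le> \<xi> then \<xi>^(N-j) * (cmod (P t \<xi>))^2 else 0) \<partial>M)
                 + lam_minus A B j * (\<integral>\<xi>. (if 1 \<le> \<xi> then \<xi>^(N-j) * (cmod (Q t \<xi>))^2 else 0) \<partial>M))\<bar>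
       \<le> Kc A B N * ((\<integral>\<xi>. (if 1 \<le> \<xi> then (cmod (P t \<xi>))^2 else 0) \<partial>M) + (\<integral>\<xi>. (if 1 \<le> \<xi> then (cmod (Q t \<xi>))^2 else 0) \<partial>M))"
proof -
  note [measurable] = idm G1m G2m
  define D where "D \<xi> = (if 1 \<le> \<xi> then \<xi>^N * ((G1 \<xi>)^2 + (G2 \<xi>)^2) else 0)" for \<xi>
  have Di: "integrable M D"
  proof -
    have "integrable M (\<lambda>\<xi>. (if 1 \<le> \<xi> then \<xi>^N * (G1 \<xi>)^2 else 0) + (if 1 \<le> \<xi> then \<xi>^N * (G2 \<xi>)^2 else 0))"
      using G1i G2i by (rule Bochner_Integration.integrable_add)
    moreover have "(\<lambda>\<xi>. (if 1 \<le> \<xi> then \<xi>^N * (G1 \<xi>)^2 else 0) + (if 1 \<le> \<xi> then \<xi>^N * (G2 \<xi>)^2 else 0)) = D"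
      unfolding D_def by (auto simp: algebra_simps)
    ultimately show ?thesis by simp
  qed
  have PQD: "(cmod (P s \<xi>))^2 + (cmod (Q s \<xi>))^2 \<le> D \<xi>"
    and PQD': "\<xi>^N * ((cmod (P s \<xi>))^2 + (cmod (Q s \<xi>))^2) \<le> D \<xi>"
    and PD1: "\<xi>^N * (cmod (P s \<xi>))^2 \<le> D \<xi>"
    and QD1: "\<xi>^N * (cmod (Q s \<xi>))^2 \<le> D \<xi>"
    if s: "s \<in> J" and \<xi>: "\<xi> \<in> space M" "1 \<le> \<xi>" for s \<xi>
  proof -
    have p2: "(cmod (P s \<xi>))^2 \<le> (G1 \<xi>)^2" using Pb[OF s \<xi>] by (intro power_mono) auto
    have q2: "(cmod (Q s \<xi>))^2 \<le> (G2 \<xi>)^2" using Qb[OF s \<xi>] by (intro power_mono) auto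
    have xN: "1 \<le> \<xi>^N" using \<xi> by simp
    have g: "0 \<le> (G1 \<xi>)^2 + (G2 \<xi>)^2" by simp
    show "\<xi>^N * ((cmod (P s \<xi>))^2 + (cmod (Q s \<xi>))^2) \<le> D \<xi>"
    proof -
      have "\<xi>^N * ((cmod (P s \<xi>))^2 + (cmod (Q s \<xi>))^2) \<le> \<xi>^N * ((G1 \<xi>)^2 + (G2 \<xi>)^2)"
        using p2 q2 xN by (intro mult_left_mono) auto
      then show ?thesis unfolding D_def using \<xi> by simp
    qed
    moreover have "(cmod (P s \<xi>))^2 + (cmod (Q s \<xi>))^2 \<le> \<xi>^N * ((cmod (P s \<xi>))^2 + (cmod (Q s \<xi>))^2)"
      using mult_right_mono[OF xN, of "(cmod (P s \<xi>))^2 + (cmod (Q s \<xi>))^2"] by simp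
    ultimately show "(cmod (P s \<xi>))^2 + (cmod (Q s \<xi>))^2 \<le> D \<xi>"
      by linarith
    have "\<xi>^N * (cmod (P s \<xi>))^2 \<le> \<xi>^N * ((cmod (P s \<xi>))^2 + (cmod (Q s \<xi>))^2)"
      using xN by (intro mult_left_mono) auto
    then show "\<xi>^N * (cmod (P s \<xi>))^2 \<le> D \<xi>"
      using \<open>\<xi>^N * ((cmod (P s \<xi>))^2 + (cmod (Q s \<xi>))^2) \<le> D \<xi>\<close> by linarith
    have "\<xi>^N * (cmod (Q s \<xi>))^2 \<le> \<xi>^N * ((cmod (P s \<xi>))^2 + (cmod (Q s \<xi>))^2)"
      using xN by (intro mult_left_mono) auto
    then show "\<xi>^N * (cmod (Q s \<xi>))^2 \<le> D \<xi>"
      using \<open>\<xi>^N * ((cmod (P s \<xi>))^2 + (cmod (Q s \<xi>))^2) \<le> D \<xi>\<close> by linarith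
  qed
  have D0: "0 \<le> D \<xi>" for \<xi> unfolding D_def by simp
  have G1n: "0 \<le> G1 \<xi>" and G2n: "0 \<le> G2 \<xi>" if "\<xi> \<in> space M" "1 \<le> \<xi>" for \<xi>
    using Pb[OF J(2) that] Qb[OF J(2) that] by (auto intro: order_trans[OF norm_ge_zero])
    have i0P: "integrable M (\<lambda>\<xi>. if 1 \<le> \<xi> then (cmod (P s \<xi>))^2 else 0)" if s: "s \<in> J" for s
  proof (rule integrable_by_bound[OF Di])
    note [measurable] = Pm[OF s]
    show "(\<lambda>\<xi>. if 1 \<le> \<xi> then (cmod (P s \<xi>))^2 else 0) \<in> borel_measurable M" by measurable
    fix \<xi> assume \<xi>: "\<xi> \<in> space M"
    show "norm (if 1 \<le> \<xi> then (cmod (P s \<xi>))^2 else 0) \<le> D \<xi>"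
    proof (cases "1 \<le> \<xi>")
      case True
      have "(cmod (P s \<xi>))^2 + (cmod (Q s \<xi>))^2 \<le> D \<xi>" by (rule PQD[OF s \<xi> True])
      moreover have "0 \<le> (cmod (Q s \<xi>))^2" by simp
      ultimately have "(cmod (P s \<xi>))^2 \<le> D \<xi>" by linarith
      then show ?thesis using True by simp
    qed (simp add: D0)
  qed
  have i0Q: "integrable M (\<lambda>\<xi>. if 1 \<le> \<xi> then (cmod (Q s \<xi>))^2 else 0)" if s: "s \<in> J" for s
  proof (rule integrable_by_bound[OF Di])
    note [measurable] = Qm[OF s]
    show "(\<lambda>\<xi>. if 1 \<le> \<xi> then (cmod (Q s \<xi>))^2 else 0) \<in> borel_measurable M" by measurable
    fix \<xi> assume \<xi>: "\<xi> \<in> space M"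
    show "norm (if 1 \<le> \<xi> then (cmod (Q s \<xi>))^2 else 0) \<le> D \<xi>"
    proof (cases "1 \<le> \<xi>")
      case True
      have "(cmod (P s \<xi>))^2 + (cmod (Q s \<xi>))^2 \<le> D \<xi>" by (rule PQD[OF s \<xi> True])
      moreover have "0 \<le> (cmod (P s \<xi>))^2" by simp
      ultimately have "(cmod (Q s \<xi>))^2 \<le> D \<xi>" by linarith
      then show ?thesis using True by simp
    qed (simp add: D0)
  qed
  have ig: "integrable M (\<lambda>\<xi>. if 1 \<le> \<xi> then complex_of_real (1/\<xi>^j) * cnj (Q s \<xi>) * cnj (P s \<xi>) else 0)" if s: "s \<in> J" for s j
  proof (rule integrable_by_bound[OF Di])
    note [measurable] = Pm[OF s] Qm[OF s]
    show "(\<lambda>\<xi>. if 1 \<le> \<xi> then complex_of_real (1/\<xi>^j) * cnj (Q s \<xi>) * cnj (P s \<xi>) else 0) \<in> borel_measurable M" by measurable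
    fix \<xi> assume \<xi>: "\<xi> \<in> space M"
    show "norm (if 1 \<le> \<xi> then complex_of_real (1/\<xi>^j) * cnj (Q s \<xi>) * cnj (P s \<xi>) else 0) \<le> D \<xi>"
    proof (cases "1 \<le> \<xi>")
      case True
      have "norm (complex_of_real (1/\<xi>^j) * cnj (Q s \<xi>) * cnj (P s \<xi>)) = (1/\<xi>^j) * (cmod (Q s \<xi>) * cmod (P s \<xi>))"
        using True by (simp add: norm_mult norm_divide norm_power)
      also have "\<dots> \<le> 1 * (cmod (Q s \<xi>) * cmod (P s \<xi>))"
        using True by (intro mult_right_mono) auto
      also have "\<dots> \<le> (cmod (P s \<xi>))^2 + (cmod (Q s \<xi>))^2"
        using pq_le[of "Q s \<xi>" "P s \<xi>"] by simp
      also have "\<dots> \<le> D \<xi>" by (rule PQD[OF s \<xi> True])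
      finally show ?thesis using True by simp
    qed (simp add: D0)
  qed
  have ilP: "integrable M (\<lambda>\<xi>. if 1 \<le> \<xi> then \<xi>^(N-j) * (cmod (P t \<xi>))^2 else 0)" for j
  proof (rule integrable_by_bound[OF Di])
    note [measurable] = Pm[OF J(2)]
    show "(\<lambda>\<xi>. if 1 \<le> \<xi> then \<xi>^(N-j) * (cmod (P t \<xi>))^2 else 0) \<in> borel_measurable M" by measurable
    fix \<xi> assume \<xi>: "\<xi> \<in> space M"
    show "norm (if 1 \<le> \<xi> then \<xi>^(N-j) * (cmod (P t \<xi>))^2 else 0) \<le> D \<xi>"
    proof (cases "1 \<le> \<xi>")
      case True
      have "\<xi>^(N-j) * (cmod (P t \<xi>))^2 \<le> \<xi>^N * (cmod (P t \<xi>))^2"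
        using True by (intro mult_right_mono power_increasing) auto
      then show ?thesis using True PD1[OF J(2) \<xi> True] by simp
    qed (simp add: D0)
  qed
  have ilQ: "integrable M (\<lambda>\<xi>. if 1 \<le> \<xi> then \<xi>^(N-j) * (cmod (Q t \<xi>))^2 else 0)" for j
  proof (rule integrable_by_bound[OF Di])
    note [measurable] = Qm[OF J(2)]
    show "(\<lambda>\<xi>. if 1 \<le> \<xi> then \<xi>^(N-j) * (cmod (Q t \<xi>))^2 else 0) \<in> borel_measurable M" by measurable
    fix \<xi> assume \<xi>: "\<xi> \<in> space M"
    show "norm (if 1 \<le> \<xi> then \<xi>^(N-j) * (cmod (Q t \<xi>))^2 else 0) \<le> D \<xi>"
    proof (cases "1 \<le> \<xi>")
      case True
      have "\<xi>^(N-j) * (cmod (Q t \<xi>))^2 \<le> \<xi>^N * (cmod (Q t \<xi>))^2"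
        using True by (intro mult_right_mono power_increasing) auto
      then show ?thesis using True QD1[OF J(2) \<xi> True] by simp
    qed (simp add: D0)
  qed
  define g where "g s j \<xi> = (if 1 \<le> \<xi> then complex_of_real (1/\<xi>^j) * cnj (Q s \<xi>) * cnj (P s \<xi>) else 0)" for s j \<xi>
  define \<Phi> where "\<Phi> s \<xi> = (if 1 \<le> \<xi> then (cmod (P s \<xi>))^2 else 0) + (\<Sum>j\<in>{1..<N}. Re (alpha A B j * g s j \<xi>))" for s \<xi>
  define PDs where "PDs s \<xi> = PD N A B \<xi> (P s \<xi>) (Q s \<xi>)" for s \<xi>
  define QDs where "QDs s \<xi> = QD N A B \<xi> (P s \<xi>) (Q s \<xi>)" for s \<xi>
  define \<Phi>' where "\<Phi>' s \<xi> = (if 1 \<le> \<xi> then Re (PDs s \<xi> * cnj (P s \<xi>) + P s \<xi> * cnj (PDs s \<xi>))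
      + (\<Sum>j\<in>{1..<N}. Re (alpha A B j * complex_of_real (1/\<xi>^j) * (cnj (QDs s \<xi>) * cnj (P s \<xi>) + cnj (Q s \<xi>) * cnj (PDs s \<xi>)))) else 0)" for s \<xi>
  have F_eq: "(\<integral>\<xi>. (if 1 \<le> \<xi> then (cmod (P s \<xi>))^2 else 0) \<partial>M)
            + (\<Sum>j\<in>{1..<N}. Re (alpha A B j * (\<integral>\<xi>. (if 1 \<le> \<xi> then complex_of_real (1/\<xi>^j) * cnj (Q s \<xi>) * cnj (P s \<xi>) else 0) \<partial>M)))
       = (\<integral>\<xi>. \<Phi> s \<xi> \<partial>M)" if s: "s \<in> J" for s
  proof -
    have "(\<integral>\<xi>. \<Phi> s \<xi> \<partial>M) = (\<integral>\<xi>. (if 1 \<le> \<xi> then (cmod (P s \<xi>))^2 else 0) \<partial>M) + (\<integral>\<xi>. (\<Sum>j\<in>{1..<N}. Re (alpha A B j * g s j \<xi>)) \<partial>M)"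
      unfolding \<Phi>_def using i0P[OF s] ig[OF s] unfolding g_def
      by (intro Bochner_Integration.integral_add Bochner_Integration.integrable_sum integrable_Re integrable_mult_right) auto
    also have "(\<integral>\<xi>. (\<Sum>j\<in>{1..<N}. Re (alpha A B j * g s j \<xi>)) \<partial>M) = (\<Sum>j\<in>{1..<N}. (\<integral>\<xi>. Re (alpha A B j * g s j \<xi>) \<partial>M))"
      using ig[OF s] unfolding g_def
      by (intro Bochner_Integration.integral_sum integrable_Re integrable_mult_right) auto
    also have "\<dots> = (\<Sum>j\<in>{1..<N}. Re (alpha A B j * (\<integral>\<xi>. g s j \<xi> \<partial>M)))"
    proof (rule sum.cong[OF refl])
      fix j
      have "(\<integral>\<xi>. Re (alpha A B j * g s j \<xi>) \<partial>M) = Re (\<integral>\<xi>. alpha A B j * g s j \<xi> \<partial>M)"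
        using ig[OF s] unfolding g_def by (intro integral_Re integrable_mult_right) auto
      then show "(\<integral>\<xi>. Re (alpha A B j * g s j \<xi>) \<partial>M) = Re (alpha A B j * (\<integral>\<xi>. g s j \<xi> \<partial>M))" by simp
    qed
    finally show ?thesis unfolding g_def by simp
  qed
  have dPhi: "((\<lambda>\<tau>. \<Phi> \<tau> \<xi>) has_real_derivative \<Phi>' s \<xi>) (at s)" if s: "s \<in> J" and \<xi>: "\<xi> \<in> space M" for s \<xi>
  proof (cases "1 \<le> \<xi>")
    case False
    have "(\<lambda>\<tau>. \<Phi> \<tau> \<xi>) = (\<lambda>\<tau>. 0)" unfolding \<Phi>_def g_def using False by simp
    moreover have "\<Phi>' s \<xi> = 0" unfolding \<Phi>'_def using False by simp
    ultimately show ?thesis by simp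
  next
    case True
    define c where "c j = complex_of_real (1/\<xi>^j)" for j
    define Z where "Z \<tau> = P \<tau> \<xi> * cnj (P \<tau> \<xi>) + (\<Sum>j\<in>{1..<N}. alpha A B j * (c j * cnj (Q \<tau> \<xi>) * cnj (P \<tau> \<xi>)))" for \<tau>
    have eqZ: "(\<lambda>\<tau>. \<Phi> \<tau> \<xi>) = (\<lambda>\<tau>. Re (Z \<tau>))"
    proof
      fix \<tau>
      have "Re (P \<tau> \<xi> * cnj (P \<tau> \<xi>)) = (cmod (P \<tau> \<xi>))^2"
        by (simp only: complex_norm_square[symmetric] Re_complex_of_real)
      then show "\<Phi> \<tau> \<xi> = Re (Z \<tau>)"
        unfolding \<Phi>_def Z_def g_def c_def using True by (simp add: Re_sum)
    qed
    have dP: "((\<lambda>\<tau>. P \<tau> \<xi>) has_vector_derivative PDs s \<xi>) (at s)" unfolding PDs_def by (rule Pd[OF s \<xi> True])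
    have dQ: "((\<lambda>\<tau>. Q \<tau> \<xi>) has_vector_derivative QDs s \<xi>) (at s)" unfolding QDs_def by (rule Qd[OF s \<xi> True])
    have dPc: "((\<lambda>\<tau>. cnj (P \<tau> \<xi>)) has_vector_derivative cnj (PDs s \<xi>)) (at s)" by (rule has_vector_derivative_cnj[OF dP])
    have dQc: "((\<lambda>\<tau>. cnj (Q \<tau> \<xi>)) has_vector_derivative cnj (QDs s \<xi>)) (at s)" by (rule has_vector_derivative_cnj[OF dQ])
    have dZ: "(Z has_vector_derivative
       (P s \<xi> * cnj (PDs s \<xi>) + PDs s \<xi> * cnj (P s \<xi>))
       + (\<Sum>j\<in>{1..<N}. alpha A B j * (c j * cnj (Q s \<xi>) * cnj (PDs s \<xi>) + c j * cnj (QDs s \<xi>) * cnj (P s \<xi>)))) (at s)"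
      unfolding Z_def
      by (intro has_vector_derivative_add has_vector_derivative_mult[OF dP dPc] has_vector_derivative_sum
           has_vector_derivative_mult_right has_vector_derivative_mult[OF has_vector_derivative_mult_right[OF dQc] dPc])
    have "((\<lambda>\<tau>. Re (Z \<tau>)) has_vector_derivative Re ((P s \<xi> * cnj (PDs s \<xi>) + PDs s \<xi> * cnj (P s \<xi>))
       + (\<Sum>j\<in>{1..<N}. alpha A B j * (c j * cnj (Q s \<xi>) * cnj (PDs s \<xi>) + c j * cnj (QDs s \<xi>) * cnj (P s \<xi>))))) (at s)"
      by (rule bounded_linear.has_vector_derivative[OF bounded_linear_Re dZ])
    moreover have "Re ((P s \<xi> * cnj (PDs s \<xi>) + PDs s \<xi> * cnj (P s \<xi>))
       + (\<Sum>j\<in>{1..<N}. alpha A B j * (c j * cnj (Q s \<xi>) * cnj (PDs s \<xi>) + c j * cnj (QDs s \<xi>) * cnj (P s \<xi>)))) = \<Phi>' s \<xi>"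
      unfolding \<Phi>'_def c_def using True by (simp add: Re_sum algebra_simps)
    ultimately show ?thesis unfolding eqZ has_real_derivative_iff_has_vector_derivative by simp
  qed
  have bPhi: "\<bar>\<Phi>' s \<xi>\<bar> \<le> Kd N A B * D \<xi>" if s: "s \<in> J" and \<xi>: "\<xi> \<in> space M" for s \<xi>
  proof (cases "1 \<le> \<xi>")
    case True
    have "\<bar>\<Phi>' s \<xi>\<bar> \<le> Kd N A B * (\<xi>^N * ((cmod (P s \<xi>))^2 + (cmod (Q s \<xi>))^2))"
      unfolding \<Phi>'_def PDs_def QDs_def using True deriv_bound[OF True, of N A B "P s \<xi>" "Q s \<xi>"] by simp
    also have "\<dots> \<le> Kd N A B * D \<xi>"
      using PQD'[OF s \<xi> True] Kd_nonneg by (intro mult_left_mono) auto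
    finally show ?thesis .
  next
    case False
    then show ?thesis unfolding \<Phi>'_def using Kd_nonneg D0 by simp
  qed
  have mPhi': "\<Phi>' t \<in> borel_measurable M"
  proof -
    note [measurable] = Pm[OF J(2)] Qm[OF J(2)]
    show ?thesis unfolding \<Phi>'_def PDs_def QDs_def PD_def QD_def by measurable
  qed
  have iPhi: "integrable M (\<Phi> s)" if s: "s \<in> J" for s
    unfolding \<Phi>_def using i0P[OF s] ig[OF s] unfolding g_def
    by (intro Bochner_Integration.integrable_add Bochner_Integration.integrable_sum integrable_Re integrable_mult_right) auto
  have iKD: "integrable M (\<lambda>\<xi>. Kd N A B * D \<xi>)" using Di by simp
  have iPhi': "integrable M (\<Phi>' t)"
    by (rule integrable_by_bound[OF iKD mPhi']) (use bPhi[OF J(2)] in simp)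
  have der: "((\<lambda>s. \<integral>\<xi>. \<Phi> s \<xi> \<partial>M) has_real_derivative (\<integral>\<xi>. \<Phi>' t \<xi> \<partial>M)) (at t)"
    by (rule DI[OF J iPhi dPhi bPhi iKD mPhi'])
  have der2: "((\<lambda>s. (\<integral>\<xi>. (if 1 \<le> \<xi> then (cmod (P s \<xi>))^2 else 0) \<partial>M)
            + (\<Sum>j\<in>{1..<N}. Re (alpha A B j * (\<integral>\<xi>. (if 1 \<le> \<xi> then complex_of_real (1/\<xi>^j) * cnj (Q s \<xi>) * cnj (P s \<xi>) else 0) \<partial>M))))
          has_real_derivative (\<integral>\<xi>. \<Phi>' t \<xi> \<partial>M)) (at t)"
    by (rule has_field_derivative_transform_within_open[OF der J]) (rule F_eq[symmetric])
  define lP where "lP j \<xi> = (if 1 \<le> \<xi> then \<xi>^(N-j) * (cmod (P t \<xi>))^2 else 0)" for j \<xi>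
  define lQ where "lQ j \<xi> = (if 1 \<le> \<xi> then \<xi>^(N-j) * (cmod (Q t \<xi>))^2 else 0)" for j \<xi>
  define f0 where "f0 \<xi> = (if 1 \<le> \<xi> then (cmod (P t \<xi>))^2 else 0)" for \<xi>
  define q0 where "q0 \<xi> = (if 1 \<le> \<xi> then (cmod (Q t \<xi>))^2 else 0)" for \<xi>
  have ilP': "integrable M (lP j)" for j unfolding lP_def by (rule ilP)
  have ilQ': "integrable M (lQ j)" for j unfolding lQ_def by (rule ilQ)
  have if0: "integrable M f0" unfolding f0_def by (rule i0P[OF J(2)])
  have iq0: "integrable M q0" unfolding q0_def by (rule i0Q[OF J(2)])
  define R where "R \<xi> = \<Phi>' t \<xi> + (\<Sum>j\<in>{1..<N}. lam_plus A B j * lP j \<xi> + lam_minus A B j * lQ j \<xi>)" for \<xi>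
  have iR: "integrable M R"
    unfolding R_def using iPhi' ilP' ilQ'
    by (intro Bochner_Integration.integrable_add Bochner_Integration.integrable_sum integrable_mult_right) auto
  have Req: "(\<integral>\<xi>. \<Phi>' t \<xi> \<partial>M) + (\<Sum>j\<in>{1..<N}. lam_plus A B j * (\<integral>\<xi>. lP j \<xi> \<partial>M) + lam_minus A B j * (\<integral>\<xi>. lQ j \<xi> \<partial>M))
     = (\<integral>\<xi>. R \<xi> \<partial>M)"
  proof -
    have "(\<integral>\<xi>. R \<xi> \<partial>M) = (\<integral>\<xi>. \<Phi>' t \<xi> \<partial>M) + (\<integral>\<xi>. (\<Sum>j\<in>{1..<N}. lam_plus A B j * lP j \<xi> + lam_minus A B j * lQ j \<xi>) \<partial>M)"
      unfolding R_def using iPhi' ilP' ilQ'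
      by (intro Bochner_Integration.integral_add Bochner_Integration.integrable_sum integrable_mult_right) auto
    also have "(\<integral>\<xi>. (\<Sum>j\<in>{1..<N}. lam_plus A B j * lP j \<xi> + lam_minus A B j * lQ j \<xi>) \<partial>M)
       = (\<Sum>j\<in>{1..<N}. (\<integral>\<xi>. lam_plus A B j * lP j \<xi> + lam_minus A B j * lQ j \<xi> \<partial>M))"
      using ilP' ilQ' by (intro Bochner_Integration.integral_sum) auto
    also have "\<dots> = (\<Sum>j\<in>{1..<N}. lam_plus A B j * (\<integral>\<xi>. lP j \<xi> \<partial>M) + lam_minus A B j * (\<integral>\<xi>. lQ j \<xi> \<partial>M))"
      using ilP' ilQ' by (intro sum.cong refl) (simp add: Bochner_Integration.integral_add)
    finally show ?thesis by simp
  qed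
  have Rb: "\<bar>R \<xi>\<bar> \<le> Kc A B N * (f0 \<xi> + q0 \<xi>)" if \<xi>: "\<xi> \<in> space M" for \<xi>
  proof (cases "1 \<le> \<xi>")
    case True
    have "(\<Sum>j\<in>{1..<N}. lam_plus A B j * lP j \<xi> + lam_minus A B j * lQ j \<xi>)
       = (\<Sum>j\<in>{1..<N}. \<xi>^(N-j) * (lam_plus A B j * (cmod (P t \<xi>))^2 + lam_minus A B j * (cmod (Q t \<xi>))^2))"
      unfolding lP_def lQ_def using True by (intro sum.cong refl) (simp add: algebra_simps)
    then have "R \<xi> = Re (PDs t \<xi> * cnj (P t \<xi>) + P t \<xi> * cnj (PDs t \<xi>))
      + (\<Sum>j\<in>{1..<N}. Re (alpha A B j * complex_of_real (1/\<xi>^j) * (cnj (QDs t \<xi>) * cnj (P t \<xi>) + cnj (Q t \<xi>) * cnj (PDs t \<xi>))))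
      + (\<Sum>j\<in>{1..<N}. \<xi>^(N-j) * (lam_plus A B j * (cmod (P t \<xi>))^2 + lam_minus A B j * (cmod (Q t \<xi>))^2))"
      unfolding R_def \<Phi>'_def using True by simp
    then have "\<bar>R \<xi>\<bar> \<le> Kc A B N * ((cmod (P t \<xi>))^2 + (cmod (Q t \<xi>))^2)"
      unfolding PDs_def QDs_def PD_def QD_def using pointwise_bound[OF True N, where p="P t \<xi>" and q="Q t \<xi>" and A=A and B=B] by simp
    then show ?thesis unfolding f0_def q0_def using True by simp
  next
    case False
    then show ?thesis unfolding R_def \<Phi>'_def lP_def lQ_def f0_def q0_def by simp
  qed
  have "\<bar>\<integral>\<xi>. R \<xi> \<partial>M\<bar> \<le> (\<integral>\<xi>. Kc A B N * (f0 \<xi> + q0 \<xi>) \<partial>M)"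
    by (rule integral_abs_bound_integral[OF iR _ Rb]) (use if0 iq0 in auto)
  also have "\<dots> = Kc A B N * ((\<integral>\<xi>. f0 \<xi> \<partial>M) + (\<integral>\<xi>. q0 \<xi> \<partial>M))"
    using if0 iq0 by (simp add: Bochner_Integration.integral_add)
  finally have fin: "\<bar>\<integral>\<xi>. R \<xi> \<partial>M\<bar> \<le> Kc A B N * ((\<integral>\<xi>. f0 \<xi> \<partial>M) + (\<integral>\<xi>. q0 \<xi> \<partial>M))" .
  show ?thesis
    apply (rule exI[of _ "\<integral>\<xi>. \<Phi>' t \<xi> \<partial>M"])
    apply (rule conjI[OF der2])
    using fin unfolding Req[symmetric] lP_def lQ_def f0_def q0_def .
qed



lemma freq_id_meas[measurable]: "(\<lambda>\<xi>::real. \<xi>) \<in> borel_measurable (freq M)"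
  by (cases M) auto

lemma freq_space_uminus: "\<xi> \<in> space (freq M) \<Longrightarrow> - \<xi> \<in> space (freq M)"
  by (cases M) (auto simp: Ints_minus)

lemma freq_uminus_meas[measurable]: "(\<lambda>\<xi>::real. - \<xi>) \<in> measurable (freq M) (freq M)"
proof (cases M)
  case Line then show ?thesis by simp
next
  case Torus then show ?thesis by (auto simp: Ints_minus)
qed

lemma freq_distr: "distr (freq M) (freq M) uminus = freq M"
proof (cases M)
  case Line
  have "distr lborel lborel (uminus :: real \<Rightarrow> real) = distr lborel borel uminus"
    by (rule distr_cong) auto
  then show ?thesis using Line lborel_distr_uminus by simp
next
  case Torus
  have "bij_betw (uminus :: real \<Rightarrow> real) \<int> \<int>"
    by (rule bij_betwI[where g=uminus]) (auto simp: Ints_minus)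
  then show ?thesis using Torus distr_bij_count_space by simp
qed

lemma freq_integral_reflect:
  fixes f :: "real \<Rightarrow> 'b::{banach, second_countable_topology}"
  assumes "f \<in> borel_measurable (freq M)"
  shows "(\<integral>\<xi>. f (- \<xi>) \<partial>freq M) = (\<integral>\<xi>. f \<xi> \<partial>freq M)"
  using integral_distr[OF freq_uminus_meas assms] freq_distr by simp

lemma freq_integrable_reflect:
  fixes f :: "real \<Rightarrow> 'b::{banach, second_countable_topology}"
  assumes "f \<in> borel_measurable (freq M)"
  shows "integrable (freq M) (\<lambda>\<xi>. f (- \<xi>)) \<longleftrightarrow> integrable (freq M) f"
  using integrable_distr_eq[OF freq_uminus_meas assms] freq_distr by simp

lemma freq_meas_reflect:
  fixes f :: "real \<Rightarrow> 'b::topological_space"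
  assumes "f \<in> borel_measurable (freq M)"
  shows "(\<lambda>\<xi>. f (- \<xi>)) \<in> borel_measurable (freq M)"
  using measurable_compose[OF freq_uminus_meas assms] by simp


lemma E1: "normsq (freq M) (Pplus f) = (\<integral>\<xi>. (if 1 \<le> \<xi> then (cmod (f \<xi>))^2 else 0) \<partial>freq M)"
proof -
  have "(\<lambda>\<xi>. (cmod (Pplus f \<xi>))^2) = (\<lambda>\<xi>. if 1 \<le> \<xi> then (cmod (f \<xi>))^2 else 0)"
    by (auto simp: Pplus_def)
  then show ?thesis unfolding normsq_def by simp
qed

lemma E2:
  assumes [measurable]: "f \<in> borel_measurable (freq M)"
  shows "normsq (freq M) (Pminus f) = (\<integral>\<xi>. (if 1 \<le> \<xi> then (cmod (f (- \<xi>)))^2 else 0) \<partial>freq M)"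
proof -
  have m: "(\<lambda>\<xi>. (cmod (Pminus f \<xi>))^2) \<in> borel_measurable (freq M)"
    unfolding Pminus_def by measurable
  have "(\<lambda>\<xi>. (cmod (Pminus f (- \<xi>)))^2) = (\<lambda>\<xi>. if 1 \<le> \<xi> then (cmod (f (- \<xi>)))^2 else 0)"
    by (auto simp: Pminus_def)
  then show ?thesis unfolding normsq_def freq_integral_reflect[OF m, symmetric] by simp
qed

lemma sq_powr:
  assumes "\<xi> \<ge> 1" "j \<le> 2*m"
  shows "(\<bar>\<xi>\<bar> powr (real m - real j / 2))^2 = \<xi>^(2*m-j)"
proof -
  have x: "\<bar>\<xi>\<bar> = \<xi>" "\<xi> > 0" using assms by auto
  have "(\<bar>\<xi>\<bar> powr (real m - real j / 2))^2 = \<xi> powr ((real m - real j / 2) + (real m - real j / 2))"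
    unfolding x power2_eq_square by (simp only: powr_add[symmetric])
  also have "(real m - real j / 2) + (real m - real j / 2) = real (2*m-j)"
    using assms by (simp add: of_nat_diff)
  also have "\<xi> powr real (2*m-j) = \<xi>^(2*m-j)" using x by (simp add: powr_realpow)
  finally show ?thesis .
qed

lemma E3:
  assumes "j \<le> 2*m"
  shows "normsq (freq M) (absDx (real m - real j / 2) (Pplus f)) = (\<integral>\<xi>. (if 1 \<le> \<xi> then \<xi>^(2*m-j) * (cmod (f \<xi>))^2 else 0) \<partial>freq M)"
proof -
  have "(\<lambda>\<xi>. (cmod (absDx (real m - real j / 2) (Pplus f) \<xi>))^2) = (\<lambda>\<xi>. if 1 \<le> \<xi> then \<xi>^(2*m-j) * (cmod (f \<xi>))^2 else 0)"
  proof
    fix \<xi> :: real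
    show "(cmod (absDx (real m - real j / 2) (Pplus f) \<xi>))^2 = (if 1 \<le> \<xi> then \<xi>^(2*m-j) * (cmod (f \<xi>))^2 else 0)"
    proof (cases "1 \<le> \<xi>")
      case True
      then show ?thesis unfolding absDx_def Pplus_def
        using sq_powr[OF True assms] by (simp add: norm_mult power_mult_distrib)
    qed (simp add: absDx_def Pplus_def)
  qed
  then show ?thesis unfolding normsq_def by simp
qed

lemma E4:
  assumes "j \<le> 2*m" and [measurable]: "f \<in> borel_measurable (freq M)"
  shows "normsq (freq M) (absDx (real m - real j / 2) (Pminus f)) = (\<integral>\<xi>. (if 1 \<le> \<xi> then \<xi>^(2*m-j) * (cmod (f (- \<xi>)))^2 else 0) \<partial>freq M)"
proof -
  have m: "(\<lambda>\<xi>. (cmod (absDx (real m - real j / 2) (Pminus f) \<xi>))^2) \<in> borel_measurable (freq M)"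
    unfolding absDx_def Pminus_def by measurable
  have "(\<lambda>\<xi>. (cmod (absDx (real m - real j / 2) (Pminus f) (- \<xi>)))^2) = (\<lambda>\<xi>. if 1 \<le> \<xi> then \<xi>^(2*m-j) * (cmod (f (- \<xi>)))^2 else 0)"
  proof
    fix \<xi> :: real
    show "(cmod (absDx (real m - real j / 2) (Pminus f) (- \<xi>)))^2 = (if 1 \<le> \<xi> then \<xi>^(2*m-j) * (cmod (f (- \<xi>)))^2 else 0)"
    proof (cases "1 \<le> \<xi>")
      case True
      then show ?thesis unfolding absDx_def Pminus_def
        using sq_powr[OF True assms(1)] by (simp add: norm_mult power_mult_distrib)
    qed (simp add: absDx_def Pminus_def)
  qed
  then show ?thesis unfolding normsq_def freq_integral_reflect[OF m, symmetric] by simp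
qed


lemma powi_neg_of_real: "\<xi> \<noteq> 0 \<Longrightarrow> (complex_of_real \<xi>) powi (- int j) = complex_of_real (1 / \<xi>^j)"
  by (simp add: power_int_minus inverse_eq_divide)

lemma E5: "inner_L2 (freq M) (Dx (- int j) (conjF (Pminus f))) (Pplus f)
   = (\<integral>\<xi>. (if 1 \<le> \<xi> then complex_of_real (1/\<xi>^j) * cnj (f (- \<xi>)) * cnj (f \<xi>) else 0) \<partial>freq M)"
proof -
  have "(\<lambda>\<xi>. Dx (- int j) (conjF (Pminus f)) \<xi> * cnj (Pplus f \<xi>))
     = (\<lambda>\<xi>. if 1 \<le> \<xi> then complex_of_real (1/\<xi>^j) * cnj (f (- \<xi>)) * cnj (f \<xi>) else 0)"
  proof
    fix \<xi> :: real
    show "Dx (- int j) (conjF (Pminus f)) \<xi> * cnj (Pplus f \<xi>) = (if 1 \<le> \<xi> then complex_of_real (1/\<xi>^j) * cnj (f (- \<xi>)) * cnj (f \<xi>) else 0)"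
    proof (cases "1 \<le> \<xi>")
      case True
      then have "\<xi> \<noteq> 0" by auto
      then show ?thesis using True unfolding Dx_def conjF_def Pminus_def Pplus_def
        by (simp add: powi_neg_of_real)
    qed (simp add: Pplus_def)
  qed
  then show ?thesis unfolding inner_L2_def by simp
qed

lemma neg_pow_div: "1/(-x)^j = (-1)^j * (1/(x::real)^j)"
  by (cases "even j") simp_all

lemma E6:
  assumes [measurable]: "f \<in> borel_measurable (freq M)"
  shows "inner_L2 (freq M) (Dx (- int j) (conjF (Pplus f))) (Pminus f)
   = (-1)^j * (\<integral>\<xi>. (if 1 \<le> \<xi> then complex_of_real (1/\<xi>^j) * cnj (f \<xi>) * cnj (f (- \<xi>)) else 0) \<partial>freq M)"
proof -
  define h where "h \<xi> = (if \<xi> \<le> -1 then complex_of_real (1/\<xi>^j) * cnj (f (- \<xi>)) * cnj (f \<xi>) else 0)" for \<xi> :: real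
  have eq: "Dx (- int j) (conjF (Pplus f)) \<xi> * cnj (Pminus f \<xi>) = h \<xi>" for \<xi>
  proof (cases "\<xi> \<le> -1")
    case True
    then have ne: "\<xi> \<noteq> 0" by auto
    show ?thesis using True ne unfolding Dx_def conjF_def Pminus_def Pplus_def h_def
      by (simp add: powi_neg_of_real)
  qed (simp add: Pminus_def h_def)
  have m: "h \<in> borel_measurable (freq M)" unfolding h_def by measurable
  have "h (- \<xi>) = (-1)^j * (if 1 \<le> \<xi> then complex_of_real (1/\<xi>^j) * cnj (f \<xi>) * cnj (f (- \<xi>)) else 0)" for \<xi>
  proof (cases "1 \<le> \<xi>")
    case True
    have "complex_of_real (1/(-\<xi>)^j) = (-1)^j * complex_of_real (1/\<xi>^j)"
      unfolding neg_pow_div by simp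
    then show ?thesis using True unfolding h_def by simp
  qed (simp add: h_def)
  then have "(\<lambda>\<xi>. h (- \<xi>)) = (\<lambda>\<xi>. (-1)^j * (if 1 \<le> \<xi> then complex_of_real (1/\<xi>^j) * cnj (f \<xi>) * cnj (f (- \<xi>)) else 0))"
    by auto
  then have "(\<integral>\<xi>. h \<xi> \<partial>freq M) = (-1)^j * (\<integral>\<xi>. (if 1 \<le> \<xi> then complex_of_real (1/\<xi>^j) * cnj (f \<xi>) * cnj (f (- \<xi>)) else 0) \<partial>freq M)"
    unfolding freq_integral_reflect[OF m, symmetric] by simp
  then show ?thesis unfolding inner_L2_def eq .
qed

lemma E7:
  assumes [measurable]: "f \<in> borel_measurable (freq M)" and i: "integrable (freq M) (\<lambda>\<xi>. (cmod (f \<xi>))^2)"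
  shows "(\<integral>\<xi>. (if 1 \<le> \<xi> then (cmod (f \<xi>))^2 else 0) \<partial>freq M) + (\<integral>\<xi>. (if 1 \<le> \<xi> then (cmod (f (- \<xi>)))^2 else 0) \<partial>freq M)
     \<le> normsq (freq M) f"
proof -
  define h where "h \<xi> = (if \<xi> \<le> -1 then (cmod (f \<xi>))^2 else 0)" for \<xi> :: real
  have m: "h \<in> borel_measurable (freq M)" unfolding h_def by measurable
  have "(\<lambda>\<xi>. h (- \<xi>)) = (\<lambda>\<xi>. if 1 \<le> \<xi> then (cmod (f (- \<xi>)))^2 else 0)" by (auto simp: h_def)
  then have r: "(\<integral>\<xi>. (if 1 \<le> \<xi> then (cmod (f (- \<xi>)))^2 else 0) \<partial>freq M) = (\<integral>\<xi>. h \<xi> \<partial>freq M)"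
    using freq_integral_reflect[OF m] by simp
  have i1: "integrable (freq M) (\<lambda>\<xi>. if 1 \<le> \<xi> then (cmod (f \<xi>))^2 else 0)"
    by (rule integrable_by_bound[OF i]) auto
  have i2: "integrable (freq M) h"
    by (rule integrable_by_bound[OF i m]) (auto simp: h_def)
  have "(\<integral>\<xi>. (if 1 \<le> \<xi> then (cmod (f \<xi>))^2 else 0) \<partial>freq M) + (\<integral>\<xi>. h \<xi> \<partial>freq M)
     = (\<integral>\<xi>. (if 1 \<le> \<xi> then (cmod (f \<xi>))^2 else 0) + h \<xi> \<partial>freq M)"
    using i1 i2 by (simp add: Bochner_Integration.integral_add)
  also have "\<dots> \<le> (\<integral>\<xi>. (cmod (f \<xi>))^2 \<partial>freq M)"
    by (rule integral_mono[OF Bochner_Integration.integrable_add[OF i1 i2] i]) (auto simp: h_def)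
  finally show ?thesis unfolding r normsq_def .
qed



lemma alpha_flip: "alpha (\<lambda>k. (-1)^k * a k) (\<lambda>k. (-1)^k * b k) j = (-1)^j * alpha a b j"
proof (induction j rule: less_induct)
  case (less j)
  have "alpha (\<lambda>k. (-1)^k * a k) (\<lambda>k. (-1)^k * b k) j
     = (-1)^j * b j - 1/2 * (\<Sum>k\<in>{1..<j}. (1 + (-1)^(j-k)) * cnj ((-1)^(j-k) * a (j-k)) * ((-1)^k * alpha a b k))"
    unfolding alpha.simps[of "\<lambda>k. (-1)^k * a k" "\<lambda>k. (-1)^k * b k" j] using less by simp
  also have "(\<Sum>k\<in>{1..<j}. (1 + (-1)^(j-k)) * cnj ((-1)^(j-k) * a (j-k)) * ((-1)^k * alpha a b k))
     = (-1)^j * (\<Sum>k\<in>{1..<j}. (1 + (-1)^(j-k)) * cnj (a (j-k)) * alpha a b k)"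
    unfolding sum_distrib_left
  proof (rule sum.cong[OF refl])
    fix k assume k: "k \<in> {1..<j}"
    have e: "(-1::complex)^(j-k) * (-1)^k = (-1)^j"
      using k by (simp add: power_add[symmetric])
    have c: "cnj ((-1::complex)^(j-k) * a (j-k)) = (-1)^(j-k) * cnj (a (j-k))" by simp
    show "(1 + (-1)^(j-k)) * cnj ((-1)^(j-k) * a (j-k)) * ((-1)^k * alpha a b k) = (-1)^j * ((1 + (-1)^(j-k)) * cnj (a (j-k)) * alpha a b k)"
      unfolding c e[symmetric] by (simp add: algebra_simps)
  qed
  also have "(-1)^j * b j - 1/2 * ((-1)^j * (\<Sum>k\<in>{1..<j}. (1 + (-1)^(j-k)) * cnj (a (j-k)) * alpha a b k)) = (-1)^j * alpha a b j"
    unfolding alpha.simps[of a b j] by (simp add: algebra_simps)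
  finally show ?case .
qed


lemma Im_sgnpow': "Im ((-1)^k * z) = (-1)^k * Im z"
  by (cases "even k") auto

lemma flip_term:
  assumes "k \<in> {1..<j}"
  shows "cnj ((-1)^(j-k) * b (j-k)) * ((-1)^k * alpha a b k) = (-1)^j * (cnj (b (j-k)) * alpha a b k)"
proof -
  have e: "(-1::complex)^(j-k) * (-1)^k = (-1)^j"
    using assms by (simp add: power_add[symmetric])
  have c: "cnj ((-1::complex)^(j-k) * b (j-k)) = (-1)^(j-k) * cnj (b (j-k))" by simp
  show ?thesis unfolding c e[symmetric] by (simp add: algebra_simps)
qed

lemma lam_plus_flip: "lam_plus (\<lambda>k. (-1)^k * a k) (\<lambda>k. (-1)^k * b k) j = (-1)^j * lam_plus a b j"
proof -
  have "(\<Sum>k\<in>{1..<j}. (-1) ^ (j - k + 1) * Im (cnj ((-1)^(j-k) * b (j - k)) * alpha (\<lambda>k. (-1)^k * a k) (\<lambda>k. (-1)^k * b k) k))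
     = (-1)^j * (\<Sum>k\<in>{1..<j}. (-1) ^ (j - k + 1) * Im (cnj (b (j - k)) * alpha a b k))"
    unfolding sum_distrib_left alpha_flip
  proof (rule sum.cong[OF refl])
    fix k assume k: "k \<in> {1..<j}"
    show "(-1) ^ (j - k + 1) * Im (cnj ((-1)^(j-k) * b (j - k)) * ((-1)^k * alpha a b k)) = (-1)^j * ((-1) ^ (j - k + 1) * Im (cnj (b (j - k)) * alpha a b k))"
      unfolding flip_term[OF k] Im_sgnpow' by (simp add: mult_ac)
  qed
  moreover have "Im ((-1)^j * a j) = (-1)^j * Im (a j)" by (rule Im_sgnpow')
  ultimately show ?thesis unfolding lam_plus_def by (simp add: algebra_simps)
qed

lemma lam_minus_flip: "lam_minus (\<lambda>k. (-1)^k * a k) (\<lambda>k. (-1)^k * b k) j = (-1)^j * lam_minus a b j"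
proof -
  have "(\<Sum>k\<in>{1..<j}. Im (cnj ((-1)^(j-k) * b (j - k)) * alpha (\<lambda>k. (-1)^k * a k) (\<lambda>k. (-1)^k * b k) k))
     = (-1)^j * (\<Sum>k\<in>{1..<j}. Im (cnj (b (j - k)) * alpha a b k))"
    unfolding sum_distrib_left alpha_flip
    by (rule sum.cong[OF refl]) (simp only: flip_term Im_sgnpow')
  then show ?thesis unfolding lam_minus_def by simp
qed



lemma Dx_nat: "Dx (int n) f \<xi> = complex_of_real (\<xi>^n) * f \<xi>"
  unfolding Dx_def by (simp add: power_int_of_nat)

lemma sgn_even_diff:
  assumes "j \<le> 2*m"
  shows "(-1::'a::ring_1)^(2*m - j) = (-1)^j"
proof -
  have "even (2*m - j) \<longleftrightarrow> even j" using assms by auto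
  then show ?thesis by (cases "even j") auto
qed

lemma neg_pow_of_real:
  assumes "j \<le> 2*m"
  shows "complex_of_real ((-\<xi>)^(2*m-j)) = (-1)^j * complex_of_real (\<xi>^(2*m-j))"
proof -
  have "(-\<xi>)^(2*m-j) = (-1)^(2*m-j) * \<xi>^(2*m-j)" by (subst power_minus) (rule refl)
  also have "(-1::real)^(2*m-j) = (-1)^j" by (rule sgn_even_diff[OF assms])
  finally show ?thesis by simp
qed

lemma PD_match1:
  "\<i> * (Dx (int (2*m)) f \<xi> + (\<Sum>j=1..2*m. a j * Dx (int (2*m - j)) f \<xi> + b j * Dx (int (2*m - j)) (conjF f) \<xi>))
   = PD (2*m) a b \<xi> (f \<xi>) (f (-\<xi>))"
  unfolding PD_def Dx_nat conjF_def
  by (simp add: algebra_simps)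

lemma QD_match1:
  "\<i> * (Dx (int (2*m)) f (-\<xi>) + (\<Sum>j=1..2*m. a j * Dx (int (2*m - j)) f (-\<xi>) + b j * Dx (int (2*m - j)) (conjF f) (-\<xi>)))
   = QD (2*m) a b \<xi> (f \<xi>) (f (-\<xi>))"
proof -
  have "(\<Sum>j=1..2*m. a j * Dx (int (2*m - j)) f (-\<xi>) + b j * Dx (int (2*m - j)) (conjF f) (-\<xi>))
     = (\<Sum>j=1..2*m. (-1)^j * complex_of_real (\<xi> ^ (2*m-j)) * (a j * f (-\<xi>) + b j * cnj (f \<xi>)))"
  proof (rule sum.cong[OF refl])
    fix j assume "j \<in> {1..2*m}"
    then have j: "j \<le> 2*m" by auto
    show "a j * Dx (int (2*m - j)) f (-\<xi>) + b j * Dx (int (2*m - j)) (conjF f) (-\<xi>) = (-1)^j * complex_of_real (\<xi> ^ (2*m-j)) * (a j * f (-\<xi>) + b j * cnj (f \<xi>))"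
      unfolding Dx_nat conjF_def neg_pow_of_real[OF j] by (simp add: algebra_simps)
  qed
  moreover have "complex_of_real ((-\<xi>)^(2*m)) = complex_of_real (\<xi>^(2*m))" by simp
  ultimately show ?thesis unfolding QD_def Dx_nat by simp
qed

lemma PD_match2:
  "\<i> * (Dx (int (2*m)) f (-\<xi>) + (\<Sum>j=1..2*m. a j * Dx (int (2*m - j)) f (-\<xi>) + b j * Dx (int (2*m - j)) (conjF f) (-\<xi>)))
   = PD (2*m) (\<lambda>k. (-1)^k * a k) (\<lambda>k. (-1)^k * b k) \<xi> (f (-\<xi>)) (f \<xi>)"
proof -
  have "(\<Sum>j=1..2*m. a j * Dx (int (2*m - j)) f (-\<xi>) + b j * Dx (int (2*m - j)) (conjF f) (-\<xi>))
     = (\<Sum>j=1..2*m. complex_of_real (\<xi> ^ (2*m-j)) * ((-1)^j * a j * f (-\<xi>) + (-1)^j * b j * cnj (f \<xi>)))"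
  proof (rule sum.cong[OF refl])
    fix j assume "j \<in> {1..2*m}"
    then have j: "j \<le> 2*m" by auto
    show "a j * Dx (int (2*m - j)) f (-\<xi>) + b j * Dx (int (2*m - j)) (conjF f) (-\<xi>) = complex_of_real (\<xi> ^ (2*m-j)) * ((-1)^j * a j * f (-\<xi>) + (-1)^j * b j * cnj (f \<xi>))"
      unfolding Dx_nat conjF_def neg_pow_of_real[OF j] by (simp add: algebra_simps)
  qed
  moreover have "complex_of_real ((-\<xi>)^(2*m)) = complex_of_real (\<xi>^(2*m))" by simp
  ultimately show ?thesis unfolding PD_def Dx_nat by simp
qed

lemma QD_match2:
  "\<i> * (Dx (int (2*m)) f \<xi> + (\<Sum>j=1..2*m. a j * Dx (int (2*m - j)) f \<xi> + b j * Dx (int (2*m - j)) (conjF f) \<xi>))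
   = QD (2*m) (\<lambda>k. (-1)^k * a k) (\<lambda>k. (-1)^k * b k) \<xi> (f (-\<xi>)) (f \<xi>)"
proof -
  have "(\<Sum>j=1..2*m. a j * Dx (int (2*m - j)) f \<xi> + b j * Dx (int (2*m - j)) (conjF f) \<xi>)
     = (\<Sum>j=1..2*m. (-1)^j * complex_of_real (\<xi> ^ (2*m-j)) * ((-1)^j * a j * f \<xi> + (-1)^j * b j * cnj (f (-\<xi>))))"
  proof (rule sum.cong[OF refl])
    fix j
    have s: "(-1::complex)^j * (-1)^j = 1" by (simp add: power_add[symmetric])
    show "a j * Dx (int (2*m - j)) f \<xi> + b j * Dx (int (2*m - j)) (conjF f) \<xi> = (-1)^j * complex_of_real (\<xi> ^ (2*m-j)) * ((-1)^j * a j * f \<xi> + (-1)^j * b j * cnj (f (-\<xi>)))"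
      unfolding Dx_nat conjF_def
      by (simp add: algebra_simps s)
  qed
  then show ?thesis unfolding QD_def Dx_nat by simp
qed



lemma powbound:
  assumes "1 \<le> (\<xi>::real)"
  shows "\<xi>^(2*m) \<le> (1 + \<bar>\<xi>\<bar>)^(4*m)"
proof -
  have "\<xi>^(2*m) \<le> (1 + \<bar>\<xi>\<bar>)^(2*m)" using assms by (intro power_mono) auto
  also have "\<dots> \<le> (1 + \<bar>\<xi>\<bar>)^(4*m)" by (intro power_increasing) auto
  finally show ?thesis .
qed

theorem lemma2p1:
  fixes m :: nat and a b :: "nat \<Rightarrow> complex"
  assumes "m \<ge> 1"
  shows "\<exists>C::real>0. \<forall>M::domain. \<forall>J::real set. \<forall>v::real \<Rightarrow> real \<Rightarrow> complex. \<forall>g::real \<Rightarrow> real. \<forall>t::real.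
    open J \<and> t \<in> J
    \<and> (\<forall>s\<in>J. v s \<in> borel_measurable (freq M))
    \<and> (\<forall>s\<in>J. \<forall>\<xi>\<in>space (freq M).
          ((\<lambda>\<tau>. v \<tau> \<xi>) has_vector_derivative
             \<i> * (Dx (int (2*m)) (v s) \<xi>
                  + (\<Sum>j=1..2*m. a j * Dx (int (2*m - j)) (v s) \<xi>
                                + b j * Dx (int (2*m - j)) (conjF (v s)) \<xi>))) (at s))
    \<and> g \<in> borel_measurable (freq M)
    \<and> integrable (freq M) (\<lambda>\<xi>. (1 + \<bar>\<xi>\<bar>) ^ (4*m) * (g \<xi>)\<^sup>2)
    \<and> (\<forall>s\<in>J. \<forall>\<xi>\<in>space (freq M). cmod (v s \<xi>) \<le> g \<xi>)
    \<longrightarrow>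
    (\<exists>Q'. ((\<lambda>s. normsq (freq M) (Pplus (v s))
               + (\<Sum>j=1..2*m-1. Re (alpha a b j *
                    inner_L2 (freq M) (Dx (- int j) (conjF (Pminus (v s)))) (Pplus (v s)))))
            has_real_derivative Q') (at t)
       \<and> \<bar>Q' + (\<Sum>j=1..2*m-1.
              lam_plus a b j * normsq (freq M) (absDx (real m - real j / 2) (Pplus (v t)))
            + lam_minus a b j * normsq (freq M) (absDx (real m - real j / 2) (Pminus (v t))))\<bar>
         \<le> C * normsq (freq M) (v t))
    \<and>
    (\<exists>Q'. ((\<lambda>s. normsq (freq M) (Pminus (v s))
               + (\<Sum>j=1..2*m-1. Re (alpha a b j *
                    inner_L2 (freq M) (Dx (- int j) (conjF (Pplus (v s)))) (Pminus (v s)))))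
            has_real_derivative Q') (at t)
       \<and> \<bar>Q' + (\<Sum>j=1..2*m-1. (-1) ^ j * (
              lam_plus a b j * normsq (freq M) (absDx (real m - real j / 2) (Pminus (v t)))
            + lam_minus a b j * normsq (freq M) (absDx (real m - real j / 2) (Pplus (v t)))))\<bar>
         \<le> C * normsq (freq M) (v t))"
proof -
  define N where "N = 2*m"
  define aa where "aa = (\<lambda>k. (-1)^k * a k)"
  define bb where "bb = (\<lambda>k. (-1)^k * b k)"
  have N1: "N \<ge> 1" using assms unfolding N_def by simp
  have setEq: "{1..2*m-1} = {1..<N}" using assms unfolding N_def by auto
  define C where "C = max (Kc a b N) (Kc aa bb N) + 1"
  have Cpos: "C > 0" using Kc_nonneg[of a b N] Kc_nonneg[of aa bb N] unfolding C_def by linarith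
  have C1: "Kc a b N \<le> C" and C2: "Kc aa bb N \<le> C" unfolding C_def by auto
  show ?thesis
  proof (rule exI[of _ C], intro conjI allI impI)
    show "C > 0" by (rule Cpos)
    fix M J v g t
    assume H: "open J \<and> t \<in> J
    \<and> (\<forall>s\<in>J. v s \<in> borel_measurable (freq M))
    \<and> (\<forall>s\<in>J. \<forall>\<xi>\<in>space (freq M).
          ((\<lambda>\<tau>. v \<tau> \<xi>) has_vector_derivative
             \<i> * (Dx (int (2*m)) (v s) \<xi>
                  + (\<Sum>j=1..2*m. a j * Dx (int (2*m - j)) (v s) \<xi>
                                + b j * Dx (int (2*m - j)) (conjF (v s)) \<xi>))) (at s))
    \<and> g \<in> borel_measurable (freq M)
    \<and> integrable (freq M) (\<lambda>\<xi>. (1 + \<bar>\<xi>\<bar>) ^ (4*m) * (g \<xi>)\<^sup>2)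
    \<and> (\<forall>s\<in>J. \<forall>\<xi>\<in>space (freq M). cmod (v s \<xi>) \<le> g \<xi>)"
    have J: "open J" "t \<in> J" using H by auto
    have vm: "v s \<in> borel_measurable (freq M)" if "s \<in> J" for s using H that by blast
    have vd: "((\<lambda>\<tau>. v \<tau> \<xi>) has_vector_derivative
             \<i> * (Dx (int (2*m)) (v s) \<xi>
                  + (\<Sum>j=1..2*m. a j * Dx (int (2*m - j)) (v s) \<xi>
                                + b j * Dx (int (2*m - j)) (conjF (v s)) \<xi>))) (at s)"
      if "s \<in> J" "\<xi> \<in> space (freq M)" for s \<xi> using H that by blast
    have gm: "g \<in> borel_measurable (freq M)" using H by blast
    have gi: "integrable (freq M) (\<lambda>\<xi>. (1 + \<bar>\<xi>\<bar>) ^ (4*m) * (g \<xi>)\<^sup>2)" using H by blast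
    have vb: "cmod (v s \<xi>) \<le> g \<xi>" if "s \<in> J" "\<xi> \<in> space (freq M)" for s \<xi> using H that by blast
    have vrm: "(\<lambda>\<xi>. v s (- \<xi>)) \<in> borel_measurable (freq M)" if "s \<in> J" for s
      by (rule freq_meas_reflect[OF vm[OF that]])
    have grm: "(\<lambda>\<xi>. g (- \<xi>)) \<in> borel_measurable (freq M)" by (rule freq_meas_reflect[OF gm])
    have vb2: "cmod (v s (- \<xi>)) \<le> g (- \<xi>)" if "s \<in> J" "\<xi> \<in> space (freq M)" for s \<xi>
      using vb[OF that(1) freq_space_uminus[OF that(2)]] .
    have gri: "integrable (freq M) (\<lambda>\<xi>. (1 + \<bar>\<xi>\<bar>) ^ (4*m) * (g (- \<xi>))\<^sup>2)"
    proof -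
      have hm: "(\<lambda>\<xi>. (1 + \<bar>\<xi>\<bar>) ^ (4*m) * (g \<xi>)\<^sup>2) \<in> borel_measurable (freq M)"
        using gm by measurable
      show ?thesis using freq_integrable_reflect[OF hm] gi by simp
    qed
    have Gi1: "integrable (freq M) (\<lambda>\<xi>. if 1 \<le> \<xi> then \<xi>^N * (g \<xi>)^2 else 0)"
    proof (rule integrable_by_bound[OF gi])
      show "(\<lambda>\<xi>. if 1 \<le> \<xi> then \<xi>^N * (g \<xi>)^2 else 0) \<in> borel_measurable (freq M)" using gm by measurable
      fix \<xi> :: real
      show "norm (if 1 \<le> \<xi> then \<xi>^N * (g \<xi>)^2 else 0) \<le> (1 + \<bar>\<xi>\<bar>) ^ (4*m) * (g \<xi>)\<^sup>2"
        using powbound[of \<xi> m] unfolding N_def by (auto intro: mult_right_mono)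
    qed
    have Gi2: "integrable (freq M) (\<lambda>\<xi>. if 1 \<le> \<xi> then \<xi>^N * (g (- \<xi>))^2 else 0)"
    proof (rule integrable_by_bound[OF gri])
      show "(\<lambda>\<xi>. if 1 \<le> \<xi> then \<xi>^N * (g (- \<xi>))^2 else 0) \<in> borel_measurable (freq M)" using grm by measurable
      fix \<xi> :: real
      show "norm (if 1 \<le> \<xi> then \<xi>^N * (g (- \<xi>))^2 else 0) \<le> (1 + \<bar>\<xi>\<bar>) ^ (4*m) * (g (- \<xi>))\<^sup>2"
        using powbound[of \<xi> m] unfolding N_def by (auto intro: mult_right_mono)
    qed
    have vsq: "integrable (freq M) (\<lambda>\<xi>. (cmod (v t \<xi>))^2)"
    proof (rule integrable_by_bound[OF gi])
      show "(\<lambda>\<xi>. (cmod (v t \<xi>))^2) \<in> borel_measurable (freq M)" using vm[OF J(2)] by measurable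
      fix \<xi> :: real assume \<xi>: "\<xi> \<in> space (freq M)"
      have "(cmod (v t \<xi>))^2 \<le> (g \<xi>)^2" using vb[OF J(2) \<xi>] by (intro power_mono) auto
      also have "\<dots> \<le> (1 + \<bar>\<xi>\<bar>) ^ (4*m) * (g \<xi>)\<^sup>2"
        using mult_right_mono[of 1 "(1 + \<bar>\<xi>\<bar>) ^ (4*m)" "(g \<xi>)\<^sup>2"] by (simp add: one_le_power)
      finally show "norm ((cmod (v t \<xi>))^2) \<le> (1 + \<bar>\<xi>\<bar>) ^ (4*m) * (g \<xi>)\<^sup>2" by simp
    qed
    have E7t: "(\<integral>\<xi>. (if 1 \<le> \<xi> then (cmod (v t \<xi>))^2 else 0) \<partial>freq M) + (\<integral>\<xi>. (if 1 \<le> \<xi> then (cmod (v t (- \<xi>)))^2 else 0) \<partial>freq M)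
       \<le> normsq (freq M) (v t)" by (rule E7[OF vm[OF J(2)] vsq])
    have nn1: "0 \<le> (\<integral>\<xi>. (if 1 \<le> \<xi> then (cmod (v t \<xi>))^2 else 0) \<partial>freq M)" by (rule Bochner_Integration.integral_nonneg) auto
    have nn2: "0 \<le> (\<integral>\<xi>. (if 1 \<le> \<xi> then (cmod (v t (- \<xi>)))^2 else 0) \<partial>freq M)" by (rule Bochner_Integration.integral_nonneg) auto
    have RHS: "K * ((\<integral>\<xi>. (if 1 \<le> \<xi> then (cmod (v t \<xi>))^2 else 0) \<partial>freq M) + (\<integral>\<xi>. (if 1 \<le> \<xi> then (cmod (v t (- \<xi>)))^2 else 0) \<partial>freq M))
       \<le> C * normsq (freq M) (v t)" if "0 \<le> K" "K \<le> C" for K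
      using that E7t nn1 nn2 by (intro mult_mono) auto
    have RHS': "K * ((\<integral>\<xi>. (if 1 \<le> \<xi> then (cmod (v t (- \<xi>)))^2 else 0) \<partial>freq M) + (\<integral>\<xi>. (if 1 \<le> \<xi> then (cmod (v t \<xi>))^2 else 0) \<partial>freq M))
       \<le> C * normsq (freq M) (v t)" if "0 \<le> K" "K \<le> C" for K
      using RHS[OF that] by (simp add: add.commute)
    have dm: "((\<lambda>\<tau>. v \<tau> \<xi>) has_vector_derivative
             \<i> * (Dx (int (2*m)) (v s) \<xi>
                  + (\<Sum>j=1..2*m. a j * Dx (int (2*m - j)) (v s) \<xi>
                                + b j * Dx (int (2*m - j)) (conjF (v s)) \<xi>))) (at s)"
      and dmm: "((\<lambda>\<tau>. v \<tau> (- \<xi>)) has_vector_derivative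
             \<i> * (Dx (int (2*m)) (v s) (- \<xi>)
                  + (\<Sum>j=1..2*m. a j * Dx (int (2*m - j)) (v s) (- \<xi>)
                                + b j * Dx (int (2*m - j)) (conjF (v s)) (- \<xi>)))) (at s)"
      if "s \<in> J" "\<xi> \<in> space (freq M)" for s \<xi>
      using vd[OF that] vd[OF that(1) freq_space_uminus[OF that(2)]] by auto
    have d1P: "((\<lambda>\<tau>. v \<tau> \<xi>) has_vector_derivative PD N a b \<xi> (v s \<xi>) (v s (- \<xi>))) (at s)"
      if "s \<in> J" "\<xi> \<in> space (freq M)" "1 \<le> \<xi>" for s \<xi>
      using dm[OF that(1,2)] unfolding N_def PD_match1 .
    have d1Q: "((\<lambda>\<tau>. v \<tau> (- \<xi>)) has_vector_derivative QD N a b \<xi> (v s \<xi>) (v s (- \<xi>))) (at s)"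
      if "s \<in> J" "\<xi> \<in> space (freq M)" "1 \<le> \<xi>" for s \<xi>
      using dmm[OF that(1,2)] unfolding N_def QD_match1 .
    have d2P: "((\<lambda>\<tau>. v \<tau> (- \<xi>)) has_vector_derivative PD N aa bb \<xi> (v s (- \<xi>)) (v s \<xi>)) (at s)"
      if "s \<in> J" "\<xi> \<in> space (freq M)" "1 \<le> \<xi>" for s \<xi>
      using dmm[OF that(1,2)] unfolding N_def aa_def bb_def PD_match2 .
    have d2Q: "((\<lambda>\<tau>. v \<tau> \<xi>) has_vector_derivative QD N aa bb \<xi> (v s (- \<xi>)) (v s \<xi>)) (at s)"
      if "s \<in> J" "\<xi> \<in> space (freq M)" "1 \<le> \<xi>" for s \<xi>
      using dm[OF that(1,2)] unfolding N_def aa_def bb_def QD_match2 .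
    show "(\<exists>Q'. ((\<lambda>s. normsq (freq M) (Pplus (v s))
               + (\<Sum>j=1..2*m-1. Re (alpha a b j *
                    inner_L2 (freq M) (Dx (- int j) (conjF (Pminus (v s)))) (Pplus (v s)))))
            has_real_derivative Q') (at t)
       \<and> \<bar>Q' + (\<Sum>j=1..2*m-1.
              lam_plus a b j * normsq (freq M) (absDx (real m - real j / 2) (Pplus (v t)))
            + lam_minus a b j * normsq (freq M) (absDx (real m - real j / 2) (Pminus (v t))))\<bar>
         \<le> C * normsq (freq M) (v t))"
    proof -
      obtain Q' where der: "((\<lambda>s. (\<integral>\<xi>. (if 1 \<le> \<xi> then (cmod (v s \<xi>))^2 else 0) \<partial>freq M)
            + (\<Sum>j\<in>{1..<N}. Re (alpha a b j * (\<integral>\<xi>. (if 1 \<le> \<xi> then complex_of_real (1/\<xi>^j) * cnj (v s (- \<xi>)) * cnj (v s \<xi>) else 0) \<partial>freq M))))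
          has_real_derivative Q') (at t)"
        and bd: "\<bar>Q' + (\<Sum>j\<in>{1..<N}. lam_plus a b j * (\<integral>\<xi>. (if 1 \<le> \<xi> then \<xi>^(N-j) * (cmod (v t \<xi>))^2 else 0) \<partial>freq M)
                 + lam_minus a b j * (\<integral>\<xi>. (if 1 \<le> \<xi> then \<xi>^(N-j) * (cmod (v t (- \<xi>)))^2 else 0) \<partial>freq M))\<bar>
       \<le> Kc a b N * ((\<integral>\<xi>. (if 1 \<le> \<xi> then (cmod (v t \<xi>))^2 else 0) \<partial>freq M) + (\<integral>\<xi>. (if 1 \<le> \<xi> then (cmod (v t (- \<xi>)))^2 else 0) \<partial>freq M))"
        using core[OF N1 freq_id_meas J vm vrm gm grm Gi1 Gi2 vb vb2 d1P d1Q] by blast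
      have Feq: "(\<lambda>s. normsq (freq M) (Pplus (v s))
               + (\<Sum>j=1..2*m-1. Re (alpha a b j *
                    inner_L2 (freq M) (Dx (- int j) (conjF (Pminus (v s)))) (Pplus (v s)))))
          = (\<lambda>s. (\<integral>\<xi>. (if 1 \<le> \<xi> then (cmod (v s \<xi>))^2 else 0) \<partial>freq M)
            + (\<Sum>j\<in>{1..<N}. Re (alpha a b j * (\<integral>\<xi>. (if 1 \<le> \<xi> then complex_of_real (1/\<xi>^j) * cnj (v s (- \<xi>)) * cnj (v s \<xi>) else 0) \<partial>freq M))))"
        unfolding E1 E5 setEq ..
      have Leq: "(\<Sum>j=1..2*m-1.
              lam_plus a b j * normsq (freq M) (absDx (real m - real j / 2) (Pplus (v t)))
            + lam_minus a b j * normsq (freq M) (absDx (real m - real j / 2) (Pminus (v t))))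
          = (\<Sum>j\<in>{1..<N}. lam_plus a b j * (\<integral>\<xi>. (if 1 \<le> \<xi> then \<xi>^(N-j) * (cmod (v t \<xi>))^2 else 0) \<partial>freq M)
                 + lam_minus a b j * (\<integral>\<xi>. (if 1 \<le> \<xi> then \<xi>^(N-j) * (cmod (v t (- \<xi>)))^2 else 0) \<partial>freq M))"
        unfolding setEq
      proof (rule sum.cong[OF refl])
        fix j assume "j \<in> {1..<N}"
        then have j: "j \<le> 2*m" unfolding N_def by auto
        show "lam_plus a b j * normsq (freq M) (absDx (real m - real j / 2) (Pplus (v t)))
            + lam_minus a b j * normsq (freq M) (absDx (real m - real j / 2) (Pminus (v t)))
          = lam_plus a b j * (\<integral>\<xi>. (if 1 \<le> \<xi> then \<xi>^(N-j) * (cmod (v t \<xi>))^2 else 0) \<partial>freq M)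
                 + lam_minus a b j * (\<integral>\<xi>. (if 1 \<le> \<xi> then \<xi>^(N-j) * (cmod (v t (- \<xi>)))^2 else 0) \<partial>freq M)"
          unfolding E3[OF j] E4[OF j vm[OF J(2)]] N_def ..
      qed
      show ?thesis
        using der bd RHS[OF Kc_nonneg C1] unfolding Feq Leq by (intro exI[of _ Q']) auto
    qed
    show "(\<exists>Q'. ((\<lambda>s. normsq (freq M) (Pminus (v s))
               + (\<Sum>j=1..2*m-1. Re (alpha a b j *
                    inner_L2 (freq M) (Dx (- int j) (conjF (Pplus (v s)))) (Pminus (v s)))))
            has_real_derivative Q') (at t)
       \<and> \<bar>Q' + (\<Sum>j=1..2*m-1. (-1) ^ j * (
              lam_plus a b j * normsq (freq M) (absDx (real m - real j / 2) (Pminus (v t)))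
            + lam_minus a b j * normsq (freq M) (absDx (real m - real j / 2) (Pplus (v t)))))\<bar>
         \<le> C * normsq (freq M) (v t))"
    proof -
      obtain Q' where der: "((\<lambda>s. (\<integral>\<xi>. (if 1 \<le> \<xi> then (cmod (v s (- \<xi>)))^2 else 0) \<partial>freq M)
            + (\<Sum>j\<in>{1..<N}. Re (alpha aa bb j * (\<integral>\<xi>. (if 1 \<le> \<xi> then complex_of_real (1/\<xi>^j) * cnj (v s \<xi>) * cnj (v s (- \<xi>)) else 0) \<partial>freq M))))
          has_real_derivative Q') (at t)"
        and bd: "\<bar>Q' + (\<Sum>j\<in>{1..<N}. lam_plus aa bb j * (\<integral>\<xi>. (if 1 \<le> \<xi> then \<xi>^(N-j) * (cmod (v t (- \<xi>)))^2 else 0) \<partial>freq M)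
                 + lam_minus aa bb j * (\<integral>\<xi>. (if 1 \<le> \<xi> then \<xi>^(N-j) * (cmod (v t \<xi>))^2 else 0) \<partial>freq M))\<bar>
       \<le> Kc aa bb N * ((\<integral>\<xi>. (if 1 \<le> \<xi> then (cmod (v t (- \<xi>)))^2 else 0) \<partial>freq M) + (\<integral>\<xi>. (if 1 \<le> \<xi> then (cmod (v t \<xi>))^2 else 0) \<partial>freq M))"
        using core[OF N1 freq_id_meas J vrm vm grm gm Gi2 Gi1 vb2 vb d2P d2Q] by blast
      have Feq: "(\<integral>\<xi>. (if 1 \<le> \<xi> then (cmod (v s (- \<xi>)))^2 else 0) \<partial>freq M)
            + (\<Sum>j\<in>{1..<N}. Re (alpha aa bb j * (\<integral>\<xi>. (if 1 \<le> \<xi> then complex_of_real (1/\<xi>^j) * cnj (v s \<xi>) * cnj (v s (- \<xi>)) else 0) \<partial>freq M)))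
          = normsq (freq M) (Pminus (v s))
               + (\<Sum>j=1..2*m-1. Re (alpha a b j *
                    inner_L2 (freq M) (Dx (- int j) (conjF (Pplus (v s)))) (Pminus (v s))))" if s: "s \<in> J" for s
        unfolding E2[OF vm[OF s]] E6[OF vm[OF s]] setEq aa_def bb_def alpha_flip
        by (simp add: mult_ac)
      have der2: "((\<lambda>s. normsq (freq M) (Pminus (v s))
               + (\<Sum>j=1..2*m-1. Re (alpha a b j *
                    inner_L2 (freq M) (Dx (- int j) (conjF (Pplus (v s)))) (Pminus (v s)))))
            has_real_derivative Q') (at t)"
        by (rule has_field_derivative_transform_within_open[OF der J]) (rule Feq)
      have Leq: "(\<Sum>j=1..2*m-1. (-1) ^ j * (
              lam_plus a b j * normsq (freq M) (absDx (real m - real j / 2) (Pminus (v t)))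
            + lam_minus a b j * normsq (freq M) (absDx (real m - real j / 2) (Pplus (v t)))))
          = (\<Sum>j\<in>{1..<N}. lam_plus aa bb j * (\<integral>\<xi>. (if 1 \<le> \<xi> then \<xi>^(N-j) * (cmod (v t (- \<xi>)))^2 else 0) \<partial>freq M)
                 + lam_minus aa bb j * (\<integral>\<xi>. (if 1 \<le> \<xi> then \<xi>^(N-j) * (cmod (v t \<xi>))^2 else 0) \<partial>freq M))"
        unfolding setEq
      proof (rule sum.cong[OF refl])
        fix j assume "j \<in> {1..<N}"
        then have j: "j \<le> 2*m" unfolding N_def by auto
        show "(-1) ^ j * (lam_plus a b j * normsq (freq M) (absDx (real m - real j / 2) (Pminus (v t)))
            + lam_minus a b j * normsq (freq M) (absDx (real m - real j / 2) (Pplus (v t))))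
          = lam_plus aa bb j * (\<integral>\<xi>. (if 1 \<le> \<xi> then \<xi>^(N-j) * (cmod (v t (- \<xi>)))^2 else 0) \<partial>freq M)
                 + lam_minus aa bb j * (\<integral>\<xi>. (if 1 \<le> \<xi> then \<xi>^(N-j) * (cmod (v t \<xi>))^2 else 0) \<partial>freq M)"
          unfolding E3[OF j] E4[OF j vm[OF J(2)]] N_def aa_def bb_def lam_plus_flip lam_minus_flip
          by (simp add: algebra_simps)
      qed
      show ?thesis
        using der2 bd RHS'[OF Kc_nonneg C2] unfolding Leq by (intro exI[of _ Q']) auto
    qed
  qed
qed


end
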